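(* Let $A$ be an arborescence of $G$. Then $A$ is popular if and only if there exist $y=(y_S)_{S\subseteq E}$ with $y_S\ge 0$ for all $S$ and $\alpha=(\alpha_v)_{v\in V}\in\mathbb R^V$ such that $\sum_{S\subseteq E:\,e\in S}y_S+\alpha_v\ge \mathrm{wt}_A(e)$ for every $v\in V$ and every $e\in\delta(v)$, $\sum_{S\subseteq E}\mathrm{rank}(S)\,y_S+\sum_{v\in V}\alpha_v=0$, and the following hold: (1) $y$ is integral and its support $\mathcal C=\{S\subseteq E: y_S>0\}$ is a chain; (2) every $C\in\mathcal C$ satisfies $\mathrm{span}(A\cap C)=C$; (3) every element of $\mathcal C$ is nonempty, and the maximal element of $\mathcal C$ is $E$; (4) $y_C=1$ for each $C\in\mathcal C$, and $\alpha_v=-|\{C\in\mathcal C: A(v)\in C\}|$ for each $v\in V$.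
   Context: $G=(V\cup\{r\},E)$ is a directed graph, $r$ has no incoming edge, each $v\in V$ has a partial order $\succ_v$ on its set $\delta(v)$ of incoming edges; write $e\sim_v f$ if neither $e\succ_v f$ nor $f\succ_v e$. An arborescence is $A\subseteq E$ with no cycle in the underlying undirected graph and exactly one edge $A(v)\in\delta(v)$ for each $v\in V$; $A$ is popular if $\phi(A,A')\ge\phi(A',A)$ for all arborescences $A'$, where $\phi(A,A')$ counts $v$ with $A(v)\succ_v A'(v)$. For $e\in\delta(v)$, $\mathrm{wt}_A(e)=1$ if $e\succ_v A(v)$, $0$ if $e\sim_v A(v)$, and $-1$ if $A(v)\succ_v e$. $\mathrm{rank}(S)$ is the maximum size of a subset of $S$ that is acyclic in the underlying undirected graph (graphic matroid rank), and $\mathrm{span}(S)=\{e\in E:\mathrm{rank}(S\cup\{e\})=\mathrm{rank}(S)\}$. A chain is a family of distinct subsets of $E$ any two of which are comparable by strict inclusion. *)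

theory Defs
  imports Complex_Main
begin

text \<open>A directed multigraph on vertex set V \<union> {r} with edge set E; each edge e has a
  tail and a head.  Edges are abstract, so parallel edges are allowed.\<close>

definition ucycle :: "('e \<Rightarrow> 'v) \<Rightarrow> ('e \<Rightarrow> 'v) \<Rightarrow> 'e list \<Rightarrow> 'v list \<Rightarrow> bool" where
  "ucycle tail head es vs \<longleftrightarrow>
     es \<noteq> [] \<and> length vs = length es + 1 \<and> distinct es \<and>
     vs ! 0 = vs ! length es \<and> distinct (take (length es) vs) \<and>
     (\<forall>i < length es. {tail (es ! i), head (es ! i)} = {vs ! i, vs ! (i + 1)})"

definition uacyclic :: "('e \<Rightarrow> 'v) \<Rightarrow> ('e \<Rightarrow> 'v) \<Rightarrow> 'e set \<Rightarrow> bool" where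
  "uacyclic tail head S \<longleftrightarrow> \<not> (\<exists>es vs. set es \<subseteq> S \<and> ucycle tail head es vs)"

definition grank :: "('e \<Rightarrow> 'v) \<Rightarrow> ('e \<Rightarrow> 'v) \<Rightarrow> 'e set \<Rightarrow> nat" where
  "grank tail head S = Max {card F | F. F \<subseteq> S \<and> uacyclic tail head F}"

definition gspan :: "('e \<Rightarrow> 'v) \<Rightarrow> ('e \<Rightarrow> 'v) \<Rightarrow> 'e set \<Rightarrow> 'e set \<Rightarrow> 'e set" where
  "gspan tail head E S = {e \<in> E. grank tail head (S \<union> {e}) = grank tail head S}"

definition arborescence :: "'v set \<Rightarrow> 'e set \<Rightarrow> ('e \<Rightarrow> 'v) \<Rightarrow> ('e \<Rightarrow> 'v) \<Rightarrow> 'e set \<Rightarrow> bool" where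
  "arborescence V E tail head A \<longleftrightarrow>
     A \<subseteq> E \<and> uacyclic tail head A \<and> (\<forall>v \<in> V. \<exists>!e. e \<in> A \<and> head e = v)"

definition aedge :: "('e \<Rightarrow> 'v) \<Rightarrow> 'e set \<Rightarrow> 'v \<Rightarrow> 'e" where
  "aedge head A v = (THE e. e \<in> A \<and> head e = v)"

text \<open>pref v e f means e \<succ>_v f.\<close>
definition phi :: "'v set \<Rightarrow> ('e \<Rightarrow> 'v) \<Rightarrow> ('v \<Rightarrow> 'e \<Rightarrow> 'e \<Rightarrow> bool) \<Rightarrow> 'e set \<Rightarrow> 'e set \<Rightarrow> nat" where
  "phi V head pref A A' = card {v \<in> V. pref v (aedge head A v) (aedge head A' v)}"

definition popular :: "'v set \<Rightarrow> 'e set \<Rightarrow> ('e \<Rightarrow> 'v) \<Rightarrow> ('e \<Rightarrow> 'v) \<Rightarrow> ('v \<Rightarrow> 'e \<Rightarrow> 'e \<Rightarrow> bool) \<Rightarrow> 'e set \<Rightarrow> bool" where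
  "popular V E tail head pref A \<longleftrightarrow>
     arborescence V E tail head A \<and>
     (\<forall>A'. arborescence V E tail head A' \<longrightarrow> phi V head pref A A' \<ge> phi V head pref A' A)"

definition wt :: "('e \<Rightarrow> 'v) \<Rightarrow> ('v \<Rightarrow> 'e \<Rightarrow> 'e \<Rightarrow> bool) \<Rightarrow> 'e set \<Rightarrow> 'e \<Rightarrow> int" where
  "wt head pref A e =
     (let v = head e; a = aedge head A v in
      if pref v e a then 1 else if pref v a e then -1 else 0)"

definition is_chain :: "'e set set \<Rightarrow> bool" where
  "is_chain \<C> \<longleftrightarrow> (\<forall>S \<in> \<C>. \<forall>T \<in> \<C>. S \<noteq> T \<longrightarrow> S \<subset> T \<or> T \<subset> S)"

end

theory Submission
  imports Defs "HOL-Library.Transitive_Closure_Table"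
begin

definition adj :: "('e \<Rightarrow> 'v) \<Rightarrow> ('e \<Rightarrow> 'v) \<Rightarrow> 'e set \<Rightarrow> 'v \<Rightarrow> 'v \<Rightarrow> bool" where
  "adj tt hh F x y \<longleftrightarrow> (\<exists>f\<in>F. {tt f, hh f} = {x, y})"

abbreviation conn :: "('e \<Rightarrow> 'v) \<Rightarrow> ('e \<Rightarrow> 'v) \<Rightarrow> 'e set \<Rightarrow> 'v \<Rightarrow> 'v \<Rightarrow> bool" where
  "conn tt hh F \<equiv> (adj tt hh F)\<^sup>*\<^sup>*"

lemma adj_sym: "adj tt hh F x y \<Longrightarrow> adj tt hh F y x"
  unfolding adj_def by (auto simp: insert_commute)

lemma conn_sym: "conn tt hh F x y \<Longrightarrow> conn tt hh F y x"
proof (induction rule: rtranclp_induct)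
  case base then show ?case by simp
next
  case (step y z)
  then show ?case using adj_sym[OF step(2)] by (meson converse_rtranclp_into_rtranclp)
qed

lemma conn_edge: "f \<in> F \<Longrightarrow> conn tt hh F (tt f) (hh f)"
  unfolding adj_def by (intro r_into_rtranclp) auto

lemma conn_edge': "f \<in> F \<Longrightarrow> {tt f, hh f} = {x, y} \<Longrightarrow> conn tt hh F x y"
  unfolding adj_def by (intro r_into_rtranclp) auto

lemma conn_trans: "conn tt hh F x y \<Longrightarrow> conn tt hh F y z \<Longrightarrow> conn tt hh F x z"
  by (rule rtranclp_trans)

lemma conn_subst:
  assumes "conn tt hh G a b" and "\<forall>g\<in>G. conn tt hh H (tt g) (hh g)"
  shows "conn tt hh H a b"
  using assms(1)
proof (induction rule: rtranclp_induct)
  case base then show ?case by simp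
next
  case (step y z)
  from step(2) obtain g where g: "g \<in> G" "{tt g, hh g} = {y, z}" unfolding adj_def by auto
  have "conn tt hh H (tt g) (hh g)" using assms(2) g by auto
  then have "conn tt hh H y z"
    using g(2) conn_sym by (metis doubleton_eq_iff)
  then show ?case using step(3) by (rule rtranclp_trans[rotated])
qed

lemma conn_mono: "conn tt hh F x y \<Longrightarrow> F \<subseteq> G \<Longrightarrow> conn tt hh G x y"
  by (erule conn_subst) (auto intro: conn_edge)

lemma uacyclic_subset: "uacyclic tt hh S \<Longrightarrow> T \<subseteq> S \<Longrightarrow> uacyclic tt hh T"
  unfolding uacyclic_def by blast

lemma uacyclic_empty: "uacyclic tt hh {}"
  unfolding uacyclic_def ucycle_def by auto

lemma conn_cycle:
  assumes c: "conn tt hh F x y" and eF: "e \<notin> F" and ee: "{tt e, hh e} = {x, y}"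
  shows "\<not> uacyclic tt hh (insert e F)"
proof -
  from c obtain xs0 where "rtrancl_path (adj tt hh F) x xs0 y"
    by (auto simp: rtranclp_eq_rtrancl_path)
  then obtain xs where p: "rtrancl_path (adj tt hh F) x xs y" and d: "distinct (x # xs)"
    using rtrancl_path_distinct by metis
  define ps where "ps = x # xs"
  define n where "n = length xs"
  have stp: "adj tt hh F (ps ! i) (ps ! Suc i)" if "i < n" for i
    using rtrancl_path_nth[OF p, of i] that unfolding ps_def n_def by simp
  define fe where "fe i = (SOME f. f \<in> F \<and> {tt f, hh f} = {ps ! i, ps ! Suc i})" for i
  have fe: "fe i \<in> F \<and> {tt (fe i), hh (fe i)} = {ps ! i, ps ! Suc i}" if "i < n" for i
    using stp[OF that] unfolding adj_def fe_def by (metis (mono_tags, lifting) someI_ex)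
  have lastps: "ps ! n = y"
  proof (cases "xs = []")
    case True then show ?thesis using p unfolding ps_def n_def
      by (auto elim: rtrancl_path.cases)
  next
    case False then show ?thesis using rtrancl_path_last[OF p False] unfolding ps_def n_def
      by (simp add: last_conv_nth)
  qed
  have lenps: "length ps = Suc n" unfolding ps_def n_def by simp
  define es where "es = map fe [0..<n] @ [e]"
  define vs where "vs = ps @ [x]"
  have les: "length es = Suc n" unfolding es_def by simp
  have dps: "distinct ps" using d ps_def by simp
  have fe_inj: "fe i \<noteq> fe j" if "i < n" "j < n" "i \<noteq> j" for i j
  proof
    assume eq: "fe i = fe j"
    have "{ps ! i, ps ! Suc i} = {ps ! j, ps ! Suc j}" using fe[OF that(1)] fe[OF that(2)] eq by simp
    moreover have "ps ! i \<noteq> ps ! j" using that dps lenps by (simp add: nth_eq_iff_index_eq)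
    moreover have "ps ! Suc i \<noteq> ps ! Suc j" using that dps lenps by (simp add: nth_eq_iff_index_eq)
    ultimately have "ps ! i = ps ! Suc j" "ps ! Suc i = ps ! j" by (auto simp: doubleton_eq_iff)
    then have "i = Suc j" "Suc i = j" using that dps lenps by (simp_all add: nth_eq_iff_index_eq)
    then show False by simp
  qed
  have dist_es: "distinct es"
  proof -
    have "distinct (map fe [0..<n])"
      by (auto simp: distinct_map inj_on_def intro: ccontr dest: fe_inj)
    moreover have "e \<notin> set (map fe [0..<n])" using fe eF by auto
    ultimately show ?thesis unfolding es_def by simp
  qed
  have "ucycle tt hh es vs"
    unfolding ucycle_def
  proof (intro conjI allI impI)
    show "es \<noteq> []" unfolding es_def by simp
    show "length vs = length es + 1" unfolding vs_def using lenps les by simp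
    show "distinct es" by (rule dist_es)
    show "vs ! 0 = vs ! length es" unfolding vs_def les using lenps by (simp add: nth_append ps_def)
    show "distinct (take (length es) vs)" unfolding vs_def les using lenps dps by simp
    fix i assume i: "i < length es"
    show "{tt (es ! i), hh (es ! i)} = {vs ! i, vs ! (i + 1)}"
    proof (cases "i < n")
      case True
      then show ?thesis using fe[OF True] lenps unfolding es_def vs_def by (simp add: nth_append)
    next
      case False
      then have "i = n" using i les by simp
      then show ?thesis using ee lastps lenps unfolding es_def vs_def
        by (simp add: nth_append insert_commute)
    qed
  qed
  moreover have "set es \<subseteq> insert e F" unfolding es_def using fe by auto
  ultimately show ?thesis unfolding uacyclic_def by blast
qed

lemma cycle_conn:
  assumes F: "uacyclic tt hh F" and eF: "e \<notin> F" and c: "\<not> uacyclic tt hh (insert e F)"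
  shows "conn tt hh F (tt e) (hh e)"
proof -
  from c obtain es vs where ses: "set es \<subseteq> insert e F" and cy: "ucycle tt hh es vs"
    unfolding uacyclic_def by blast
  have "e \<in> set es"
  proof (rule ccontr)
    assume "e \<notin> set es"
    then have "set es \<subseteq> F" using ses by auto
    then show False using F cy unfolding uacyclic_def by blast
  qed
  then obtain i where i: "i < length es" "es ! i = e" by (auto simp: in_set_conv_nth)
  define k where "k = length es"
  have cyc: "es \<noteq> []" "length vs = k + 1" "distinct es" "vs ! 0 = vs ! k"
    "\<forall>j < k. {tt (es ! j), hh (es ! j)} = {vs ! j, vs ! (j + 1)}"
    using cy unfolding ucycle_def k_def by auto
  have other: "es ! j \<in> F" if "j < k" "j \<noteq> i" for j
  proof -
    have "es ! j \<noteq> e" using cyc(3) i that unfolding k_def by (metis nth_eq_iff_index_eq)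
    moreover have "es ! j \<in> set es" using that k_def by simp
    ultimately show ?thesis using ses by auto
  qed
  have walk: "conn tt hh F (vs ! a) (vs ! (a + d))" if "a + d \<le> k" "\<forall>j. a \<le> j \<and> j < a + d \<longrightarrow> j \<noteq> i" for a d
    using that
  proof (induction d)
    case 0 then show ?case by simp
  next
    case (Suc d)
    have IH: "conn tt hh F (vs ! a) (vs ! (a + d))" using Suc by auto
    have j: "a + d < k" "a + d \<noteq> i" using Suc.prems by auto
    have "conn tt hh F (vs ! (a + d)) (vs ! (a + d + 1))"
      using conn_edge'[OF other[OF j], of tt hh "vs ! (a + d)" "vs ! (a + d + 1)"] cyc(5) j(1) by auto
    then show ?case using IH by (simp add: conn_trans)
  qed
  have w1': "conn tt hh F (vs ! (i + 1)) (vs ! ((i + 1) + (k - (i + 1))))"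
    by (rule walk) (use i k_def in auto)
  have "(i + 1) + (k - (i + 1)) = k" using i k_def by simp
  then have w1: "conn tt hh F (vs ! (i + 1)) (vs ! k)" using w1' by simp
  have w2: "conn tt hh F (vs ! 0) (vs ! i)"
    using walk[of 0 i] i k_def by auto
  have "conn tt hh F (vs ! (i + 1)) (vs ! i)" using w1 w2 cyc(4) by (metis conn_trans)
  moreover have "{tt e, hh e} = {vs ! i, vs ! (i + 1)}" using cyc(5) i k_def by auto
  ultimately show ?thesis
    by (metis conn_sym doubleton_eq_iff)
qed

lemma swap_acyclic:
  assumes T: "uacyclic tt hh T" and fT: "f \<in> T" and eT: "e \<notin> T"
    and c: "conn tt hh (insert e (T - {f})) (tt f) (hh f)"
  shows "uacyclic tt hh (insert e (T - {f}))"
proof (rule ccontr)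
  assume nc: "\<not> uacyclic tt hh (insert e (T - {f}))"
  have T0: "uacyclic tt hh (T - {f})" using T by (rule uacyclic_subset) auto
  have "e \<notin> T - {f}" using eT by auto
  then have ce: "conn tt hh (T - {f}) (tt e) (hh e)" using cycle_conn[OF T0 _ nc] by simp
  have "\<forall>g\<in>insert e (T - {f}). conn tt hh (T - {f}) (tt g) (hh g)"
    using ce by (auto intro: conn_edge)
  then have "conn tt hh (T - {f}) (tt f) (hh f)" using conn_subst[OF c] by blast
  then have "\<not> uacyclic tt hh (insert f (T - {f}))" by (rule conn_cycle) auto
  moreover have "insert f (T - {f}) = T" using fT by auto
  ultimately show False using T by simp
qed

lemma acyclic_span_card:
  assumes "finite X" "finite F" "uacyclic tt hh X" "uacyclic tt hh F"
    and "\<forall>x\<in>X. conn tt hh F (tt x) (hh x)"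
  shows "card X \<le> card F"
  using assms
proof (induction "card (X - F)" arbitrary: X rule: less_induct)
  case less
  show ?case
  proof (cases "X \<subseteq> F")
    case True then show ?thesis using less.prems(2) by (simp add: card_mono)
  next
    case False
    then obtain x where x: "x \<in> X" "x \<notin> F" by auto
    define X0 where "X0 = X - {x}"
    have X0a: "uacyclic tt hh X0" using less.prems(3) unfolding X0_def by (rule uacyclic_subset) auto
    have X0x: "insert x X0 = X" using x X0_def by auto
    have xX0: "x \<notin> X0" unfolding X0_def by simp
    have finX0: "finite X0" using less.prems(1) X0_def by simp
    have nx: "\<not> conn tt hh X0 (tt x) (hh x)"
    proof
      assume "conn tt hh X0 (tt x) (hh x)"
      then have "\<not> uacyclic tt hh (insert x X0)" by (rule conn_cycle) (auto simp: X0_def)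
      then show False using less.prems(3) X0x by simp
    qed
    have "\<exists>f\<in>F. \<not> conn tt hh X0 (tt f) (hh f)"
    proof (rule ccontr)
      assume "\<not> ?thesis"
      then have allF: "\<forall>f\<in>F. conn tt hh X0 (tt f) (hh f)" by blast
      have "conn tt hh F (tt x) (hh x)" using less.prems(5) x(1) by blast
      then have "conn tt hh X0 (tt x) (hh x)" using allF by (rule conn_subst)
      then show False using nx by simp
    qed
    then obtain f where f: "f \<in> F" "\<not> conn tt hh X0 (tt f) (hh f)" by blast
    have fX0: "f \<notin> X0"
    proof
      assume "f \<in> X0"
      then have "conn tt hh X0 (tt f) (hh f)" by (rule conn_edge)
      then show False using f(2) by simp
    qed
    define X1 where "X1 = insert f X0"
    have X1a: "uacyclic tt hh X1"
    proof (rule ccontr)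
      assume "\<not> uacyclic tt hh X1"
      then have "\<not> uacyclic tt hh (insert f X0)" unfolding X1_def .
      then have "conn tt hh X0 (tt f) (hh f)" by (rule cycle_conn[OF X0a fX0])
      then show False using f(2) by simp
    qed
    have c1: "card X1 = Suc (card X0)" unfolding X1_def using finX0 fX0 by simp
    have c2: "card X = Suc (card X0)" using X0x finX0 xX0 by (metis card_insert_disjoint)
    have cardX1: "card X1 = card X" using c1 c2 by simp
    have "X1 - F = (X - F) - {x}" unfolding X1_def X0_def using f(1) by auto
    then have lt: "card (X1 - F) < card (X - F)"
      by (simp only:) (rule card_Diff1_less, use x less.prems(1) in auto)
    have finX1: "finite X1" unfolding X1_def using finX0 by simp
    have allX1: "\<forall>y\<in>X1. conn tt hh F (tt y) (hh y)"
    proof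
      fix y assume "y \<in> X1"
      then have "y = f \<or> y \<in> X" unfolding X1_def X0_def by auto
      then show "conn tt hh F (tt y) (hh y)"
      proof
        assume "y = f" then show ?thesis using conn_edge[OF f(1)] by simp
      next
        assume "y \<in> X" then show ?thesis using less.prems(5) by blast
      qed
    qed
    have "card X1 \<le> card F" by (rule less.hyps[OF lt finX1 less.prems(2) X1a less.prems(4) allX1])
    then show ?thesis using cardX1 by simp
  qed
qed

lemma grank_ge:
  assumes "finite S" "F \<subseteq> S" "uacyclic tt hh F"
  shows "card F \<le> grank tt hh S"
proof -
  have "{card F | F. F \<subseteq> S \<and> uacyclic tt hh F} \<subseteq> card ` Pow S" by auto
  then have fin: "finite {card F | F. F \<subseteq> S \<and> uacyclic tt hh F}"
    by (rule finite_subset) (use assms(1) in simp)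
  show ?thesis unfolding grank_def using assms by (intro Max_ge[OF fin]) auto
qed

lemma grank_obtain:
  assumes "finite S"
  obtains F where "F \<subseteq> S" "uacyclic tt hh F" "grank tt hh S = card F"
proof -
  have "{card F | F. F \<subseteq> S \<and> uacyclic tt hh F} \<subseteq> card ` Pow S" by auto
  then have fin: "finite {card F | F. F \<subseteq> S \<and> uacyclic tt hh F}"
    by (rule finite_subset) (use assms(1) in simp)
  have ne: "{card F | F. F \<subseteq> S \<and> uacyclic tt hh F} \<noteq> {}" using uacyclic_empty by blast
  have "grank tt hh S \<in> {card F | F. F \<subseteq> S \<and> uacyclic tt hh F}"
    unfolding grank_def using Max_in[OF fin ne] .
  then show ?thesis using that by auto
qed

lemma grank_acyclic:
  assumes "finite F" "uacyclic tt hh F"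
  shows "grank tt hh F = card F"
proof -
  obtain G where G: "G \<subseteq> F" "uacyclic tt hh G" "grank tt hh F = card G"
    using grank_obtain[OF assms(1)] by blast
  have "card G \<le> card F" using G(1) assms(1) by (simp add: card_mono)
  moreover have "card F \<le> grank tt hh F" using grank_ge[OF assms(1) _ assms(2)] by simp
  ultimately show ?thesis using G(3) by simp
qed

lemma grank_insert_cyclic:
  assumes "finite F" "uacyclic tt hh F" "e \<notin> F" "\<not> uacyclic tt hh (insert e F)"
  shows "grank tt hh (insert e F) = card F"
proof -
  obtain G where G: "G \<subseteq> insert e F" "uacyclic tt hh G" "grank tt hh (insert e F) = card G"
    using grank_obtain[of "insert e F"] assms(1) by blast
  have "card G \<le> card F"
  proof (rule ccontr)
    assume "\<not> card G \<le> card F"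
    then have "card G \<ge> card (insert e F)" using assms(1,3) by simp
    then have "G = insert e F" using G(1) assms(1) by (simp add: card_seteq)
    then show False using G(2) assms(4) by simp
  qed
  moreover have "card F \<le> grank tt hh (insert e F)" using grank_ge[of "insert e F" F] assms by auto
  ultimately show ?thesis using G(3) by simp
qed

lemma grank_insert_acyclic:
  assumes "finite F" "uacyclic tt hh (insert e F)" "e \<notin> F"
  shows "grank tt hh (insert e F) = Suc (card F)"
  using grank_acyclic[of "insert e F"] assms by simp

lemma gspan_char:
  assumes "finite F" "uacyclic tt hh F"
  shows "gspan tt hh E F = {e\<in>E. e \<in> F \<or> conn tt hh F (tt e) (hh e)}"
proof -
  have g: "grank tt hh F = card F" using grank_acyclic assms by blast
  have key: "grank tt hh (F \<union> {e}) = grank tt hh F \<longleftrightarrow> e \<in> F \<or> conn tt hh F (tt e) (hh e)" for e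
  proof (cases "e \<in> F")
    case True
    then have "F \<union> {e} = F" by blast
    then show ?thesis using True by simp
  next
    case False
    have FE: "F \<union> {e} = insert e F" by blast
    show ?thesis
    proof (cases "uacyclic tt hh (insert e F)")
      case True
      have nc: "\<not> conn tt hh F (tt e) (hh e)"
      proof
        assume "conn tt hh F (tt e) (hh e)"
        then have "\<not> uacyclic tt hh (insert e F)" by (rule conn_cycle) (use False in auto)
        then show False using True by simp
      qed
      have "grank tt hh (F \<union> {e}) = Suc (card F)"
        unfolding FE by (rule grank_insert_acyclic[OF assms(1) True False])
      then have "grank tt hh (F \<union> {e}) \<noteq> grank tt hh F" using g by simp
      then show ?thesis using nc False by blast
    next
      case nc: False
      have c: "conn tt hh F (tt e) (hh e)" using cycle_conn[OF assms(2) False nc] .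
      have "grank tt hh (F \<union> {e}) = card F"
        unfolding FE by (rule grank_insert_cyclic[OF assms(1,2) False nc])
      then show ?thesis using c g by simp
    qed
  qed
  show ?thesis unfolding gspan_def by (intro Collect_cong conj_cong refl key)
qed

locale arb_tree =
  fixes V :: "'v set" and r :: 'v and E :: "'e set" and tail head :: "'e \<Rightarrow> 'v" and A :: "'e set"
  assumes finV: "finite V" and finE: "finite E" and rV: "r \<notin> V"
    and ends: "\<forall>e\<in>E. tail e \<in> V \<union> {r} \<and> head e \<in> V"
    and arb: "arborescence V E tail head A"
begin

definition par :: "'v \<Rightarrow> 'v" where "par v = tail (aedge head A v)"

lemma A_sub: "A \<subseteq> E" and A_acyc: "uacyclic tail head A"
  and A_unique: "\<And>v. v \<in> V \<Longrightarrow> \<exists>!e. e \<in> A \<and> head e = v"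
  using arb unfolding arborescence_def by auto

lemma aedge_in: "v \<in> V \<Longrightarrow> aedge head A v \<in> A \<and> head (aedge head A v) = v"
  unfolding aedge_def using theI'[OF A_unique] by blast

lemma aedge_eq: "e \<in> A \<Longrightarrow> aedge head A (head e) = e"
proof -
  assume e: "e \<in> A"
  then have hv: "head e \<in> V" using A_sub ends by auto
  show ?thesis using A_unique[OF hv] aedge_in[OF hv] e by blast
qed

lemma aedge_inj: "inj_on (aedge head A) V"
  by (metis aedge_in inj_onI)

lemma par_in: "v \<in> V \<Longrightarrow> par v \<in> V \<union> {r}"
  unfolding par_def using aedge_in A_sub ends by blast

lemma tail_aedge: "tail (aedge head A v) = par v"
  unfolding par_def by simp

lemma head_aedge: "v \<in> V \<Longrightarrow> head (aedge head A v) = v"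
  using aedge_in by blast

lemma no_par_cycle:
  assumes y: "y \<in> V" and k: "0 < k" "(par ^^ k) y = y" and inV: "\<forall>i<k. (par ^^ i) y \<in> V"
  shows False
proof -
  define k0 where "k0 = (LEAST k. 0 < k \<and> (par ^^ k) y = y)"
  have k0: "0 < k0" "(par ^^ k0) y = y" using LeastI[of "\<lambda>k. 0 < k \<and> (par ^^ k) y = y" k] k
    unfolding k0_def by auto
  have k0k: "k0 \<le> k" unfolding k0_def using k by (simp add: Least_le)
  have inV0: "(par ^^ i) y \<in> V" if "i < k0" for i using inV that k0k by simp
  have dist: "(par ^^ i) y \<noteq> (par ^^ j) y" if "i < j" "j < k0" for i j
  proof
    assume eq: "(par ^^ i) y = (par ^^ j) y"
    have "(par ^^ (k0 - j + i)) y = (par ^^ (k0 - j)) ((par ^^ i) y)" by (simp add: funpow_add)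
    also have "\<dots> = (par ^^ (k0 - j)) ((par ^^ j) y)" using eq by simp
    also have "\<dots> = (par ^^ (k0 - j + j)) y" by (simp add: funpow_add)
    also have "\<dots> = (par ^^ k0) y" using that by simp
    finally have "(par ^^ (k0 - j + i)) y = y" using k0 by simp
    moreover have "0 < k0 - j + i" "k0 - j + i < k0" using that by auto
    ultimately show False using not_less_Least[of "k0 - j + i" "\<lambda>k. 0 < k \<and> (par ^^ k) y = y"]
      unfolding k0_def[symmetric] by blast
  qed
  define es where "es = map (\<lambda>i. aedge head A ((par ^^ i) y)) [0..<k0]"
  define vs where "vs = map (\<lambda>i. (par ^^ i) y) [0..<Suc k0]"
  have dv: "distinct (map (\<lambda>i. (par ^^ i) y) [0..<k0])"
    unfolding distinct_map using dist by (auto simp: inj_on_def) (metis linorder_neqE_nat)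
  have "ucycle tail head es vs"
    unfolding ucycle_def
  proof (intro conjI allI impI)
    show "es \<noteq> []" using k0 unfolding es_def by simp
    show "length vs = length es + 1" unfolding es_def vs_def by simp
    show "distinct es"
    proof -
      have eq: "es = map (aedge head A) (map (\<lambda>i. (par ^^ i) y) [0..<k0])" unfolding es_def by simp
      have "inj_on (aedge head A) (set (map (\<lambda>i. (par ^^ i) y) [0..<k0]))"
        by (rule inj_on_subset[OF aedge_inj]) (use inV0 in auto)
      then show ?thesis unfolding eq distinct_map[of "aedge head A"] using dv by (intro conjI)
    qed
    show "vs ! 0 = vs ! length es" unfolding es_def vs_def using k0 by (simp del: upt_Suc)
    show "distinct (take (length es) vs)"
      unfolding es_def vs_def using dv by (simp add: take_map del: upt_Suc)
    fix i assume i: "i < length es"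
    then have ik: "i < k0" unfolding es_def by simp
    have "es ! i = aedge head A ((par ^^ i) y)" unfolding es_def using ik by simp
    moreover have "vs ! i = (par ^^ i) y" "vs ! (i + 1) = par ((par ^^ i) y)"
      unfolding vs_def using ik by (simp_all del: upt_Suc)
    ultimately show "{tail (es ! i), head (es ! i)} = {vs ! i, vs ! (i + 1)}"
      using head_aedge[OF inV0[OF ik]] tail_aedge by (auto simp: insert_commute)
  qed
  moreover have "set es \<subseteq> A" unfolding es_def using aedge_in inV0 by auto
  ultimately show False using A_acyc unfolding uacyclic_def by blast
qed

lemma reach: "v \<in> V \<Longrightarrow> \<exists>n. (par ^^ n) v = r"
proof (rule ccontr)
  assume v: "v \<in> V" and nr: "\<nexists>n. (par ^^ n) v = r"
  have allV: "(par ^^ n) v \<in> V" for n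
  proof (induction n)
    case 0 then show ?case using v by simp
  next
    case (Suc n)
    then have "(par ^^ Suc n) v \<in> V \<union> {r}" using par_in by simp
    then show ?case using nr by blast
  qed
  have "\<not> inj_on (\<lambda>n. (par ^^ n) v) {..card V}"
  proof
    assume inj: "inj_on (\<lambda>n. (par ^^ n) v) {..card V}"
    have "card ((\<lambda>n. (par ^^ n) v) ` {..card V}) = Suc (card V)"
      using card_image[OF inj] by simp
    moreover have "card ((\<lambda>n. (par ^^ n) v) ` {..card V}) \<le> card V"
      using allV finV by (intro card_mono) auto
    ultimately show False by simp
  qed
  then obtain i j where ij: "i < j" "(par ^^ i) v = (par ^^ j) v"
    unfolding inj_on_def by (metis linorder_neqE_nat)
  define y where "y = (par ^^ i) v"
  have "(par ^^ (j - i)) y = (par ^^ (j - i + i)) v" unfolding y_def by (simp add: funpow_add)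
  also have "\<dots> = y" using ij unfolding y_def by simp
  finally have cy: "(par ^^ (j - i)) y = y" .
  have yV: "(par ^^ k) y \<in> V" for k
  proof -
    have "(par ^^ k) y = (par ^^ (k + i)) v" unfolding y_def by (simp add: funpow_add)
    then show ?thesis using allV by simp
  qed
  have "y \<in> V" using yV[of 0] by simp
  then show False by (rule no_par_cycle[of y "j - i"]) (use cy yV ij(1) in auto)
qed

definition d :: "'v \<Rightarrow> nat" where "d x = (LEAST n. (par ^^ n) x = r)"

lemma d_r: "d r = 0" unfolding d_def by simp

lemma d_par: assumes v: "v \<in> V" shows "d v = Suc (d (par v))"
proof -
  obtain n where n: "(par ^^ n) v = r" using reach[OF v] by blast
  have n0: "(par ^^ d v) v = r" unfolding d_def by (rule LeastI[of "\<lambda>n. (par ^^ n) v = r" n]) (rule n)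
  have "d v \<noteq> 0"
  proof
    assume "d v = 0"
    then have "v = r" using n0 by simp
    then show False using v rV by simp
  qed
  then obtain m where m: "d v = Suc m" by (cases "d v") auto
  have pm: "(par ^^ m) (par v) = r" using n0 unfolding m by (simp add: funpow_Suc_right del: funpow.simps)
  then have le1: "d (par v) \<le> m" unfolding d_def by (rule Least_le)
  have "(par ^^ d (par v)) (par v) = r" unfolding d_def
    by (rule LeastI[of "\<lambda>n. (par ^^ n) (par v) = r" m]) (rule pm)
  then have "(par ^^ Suc (d (par v))) v = r" by (simp add: funpow_Suc_right del: funpow.simps)
  then have "d v \<le> Suc (d (par v))" unfolding d_def by (rule Least_le)
  then show ?thesis using le1 m by simp
qed

lemma tree_induct[consumes 1, case_names root step]:
  assumes x: "x \<in> V \<union> {r}" and root: "P r" and step: "\<And>v. v \<in> V \<Longrightarrow> P (par v) \<Longrightarrow> P v"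
  shows "P x"
proof -
  have "\<forall>x\<in>V \<union> {r}. d x = n \<longrightarrow> P x" for n
  proof (induction n)
    case 0
    show ?case
    proof (intro ballI impI)
      fix x assume x: "x \<in> V \<union> {r}" "d x = 0"
      have "x \<notin> V"
      proof
        assume "x \<in> V"
        then have "d x = Suc (d (par x))" by (rule d_par)
        then show False using x(2) by simp
      qed
      then have "x = r" using x(1) by simp
      then show "P x" using root by simp
    qed
  next
    case (Suc n)
    show ?case
    proof (intro ballI impI)
      fix x assume x: "x \<in> V \<union> {r}" "d x = Suc n"
      have "x \<noteq> r" using x(2) d_r by auto
      then have xV: "x \<in> V" using x(1) by simp
      then have "d (par x) = n" using d_par[OF xV] x(2) by simp
      then have "P (par x)" using Suc par_in[OF xV] by blast
      then show "P x" using step xV by blast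
    qed
  qed
  then show ?thesis using x by blast
qed

definition anc :: "'v \<Rightarrow> 'v set" where "anc x = {(par ^^ i) x | i. i \<le> d x}"

lemma anc_r: "anc r = {r}" unfolding anc_def d_r by simp

lemma anc_par: assumes v: "v \<in> V" shows "anc v = insert v (anc (par v))"
proof -
  have "anc v = {(par ^^ i) v | i. i \<le> Suc (d (par v))}" unfolding anc_def d_par[OF v] ..
  also have "\<dots> = insert v {(par ^^ i) (par v) | i. i \<le> d (par v)}"
  proof (rule set_eqI, rule iffI)
    fix z assume "z \<in> {(par ^^ i) v | i. i \<le> Suc (d (par v))}"
    then obtain i where i: "z = (par ^^ i) v" "i \<le> Suc (d (par v))" by blast
    show "z \<in> insert v {(par ^^ i) (par v) | i. i \<le> d (par v)}"
    proof (cases i)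
      case 0 then show ?thesis using i by simp
    next
      case (Suc j) then show ?thesis using i by (auto simp: funpow_Suc_right simp del: funpow.simps)
    qed
  next
    fix z assume "z \<in> insert v {(par ^^ i) (par v) | i. i \<le> d (par v)}"
    then consider "z = v" | j where "z = (par ^^ j) (par v)" "j \<le> d (par v)" by blast
    then show "z \<in> {(par ^^ i) v | i. i \<le> Suc (d (par v))}"
    proof cases
      case 1 then show ?thesis by (auto intro!: exI[of _ 0])
    next
      case 2 then show ?thesis
        by (auto simp: funpow_Suc_right simp del: funpow.simps intro!: exI[of _ "Suc j"])
    qed
  qed
  also have "\<dots> = insert v (anc (par v))" unfolding anc_def ..
  finally show ?thesis .
qed

lemma self_anc: "x \<in> anc x" unfolding anc_def by (auto intro!: exI[of _ 0])

lemma finite_anc: "finite (anc x)"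
proof -
  have "anc x = (\<lambda>i. (par ^^ i) x) ` {..d x}" unfolding anc_def by auto
  then show ?thesis by simp
qed

lemma anc_sub: "x \<in> V \<union> {r} \<Longrightarrow> anc x \<subseteq> V \<union> {r}"
proof (induction rule: tree_induct)
  case root then show ?case using anc_r by simp
next
  case (step v) then show ?case using anc_par[OF step(1)] by simp
qed

lemma r_anc: "x \<in> V \<union> {r} \<Longrightarrow> r \<in> anc x"
proof (induction rule: tree_induct)
  case root then show ?case using anc_r by simp
next
  case (step v) then show ?case using anc_par[OF step(1)] by simp
qed

lemma anc_d: "x \<in> V \<union> {r} \<Longrightarrow> y \<in> anc x \<Longrightarrow> d y \<le> d x \<and> (d y = d x \<longrightarrow> y = x)"
proof (induction arbitrary: y rule: tree_induct)
  case root then show ?case using anc_r by simp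
next
  case (step v)
  have av: "anc v = insert v (anc (par v))" using anc_par[OF step(1)] .
  show ?case
  proof (cases "y = v")
    case True then show ?thesis by simp
  next
    case False
    then have "y \<in> anc (par v)" using step(3) av by simp
    then have "d y \<le> d (par v)" using step(2) by blast
    then show ?thesis using d_par[OF step(1)] by simp
  qed
qed

lemma par_notin: assumes vV: "v \<in> V" shows "v \<notin> anc (par v)"
proof
  assume "v \<in> anc (par v)"
  then have "d v \<le> d (par v)" using anc_d[OF par_in[OF vV]] by blast
  then show False using d_par[OF vV] by simp
qed

lemma anc_trans: "x \<in> V \<union> {r} \<Longrightarrow> y \<in> anc x \<Longrightarrow> anc y \<subseteq> anc x"
proof (induction arbitrary: y rule: tree_induct)
  case root then show ?case using anc_r by simp
next
  case (step v)
  have av: "anc v = insert v (anc (par v))" using anc_par[OF step(1)] .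
  show ?case
  proof (cases "y = v")
    case True then show ?thesis by simp
  next
    case False
    then have "y \<in> anc (par v)" using step(3) av by simp
    then have "anc y \<subseteq> anc (par v)" by (rule step(2))
    then show ?thesis using av by auto
  qed
qed

lemma anc_chain: "x \<in> V \<union> {r} \<Longrightarrow> y \<in> anc x \<Longrightarrow> z \<in> anc x \<Longrightarrow> y \<in> anc z \<or> z \<in> anc y"
proof (induction arbitrary: y z rule: tree_induct)
  case root then show ?case using anc_r by simp
next
  case (step v)
  have av: "anc v = insert v (anc (par v))" using anc_par[OF step(1)] .
  show ?case
  proof (cases "y = v")
    case True
    then show ?thesis using step(4) by simp
  next
    case yv: False
    show ?thesis
    proof (cases "z = v")
      case True then show ?thesis using step(3) by simp
    next
      case False
      have "y \<in> anc (par v)" "z \<in> anc (par v)" using step(3,4) av yv False by auto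
      then show ?thesis by (rule step(2))
    qed
  qed
qed

lemma anc_antisym:
  assumes "x \<in> V \<union> {r}" "y \<in> V \<union> {r}" "y \<in> anc x" "x \<in> anc y" shows "x = y"
proof -
  have 1: "d y \<le> d x \<and> (d y = d x \<longrightarrow> y = x)" using anc_d[OF assms(1,3)] .
  have 2: "d x \<le> d y" using anc_d[OF assms(2,4)] by blast
  have "d y = d x" using 1 2 by simp
  then show ?thesis using 1 by simp
qed

lemma anc_par_diff: assumes "v \<in> V" shows "anc (par v) = anc v - {v}"
  using anc_par[OF assms] par_notin[OF assms] by auto

definition PP :: "'v \<Rightarrow> 'v \<Rightarrow> 'v set" where "PP a b = (anc a - anc b) \<union> (anc b - anc a)"

definition Pv :: "'e \<Rightarrow> 'v set" where "Pv e = PP (tail e) (head e)"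

lemma PP_sym: "PP a b = PP b a" unfolding PP_def by blast

lemma PP_sub: assumes "a \<in> V \<union> {r}" "b \<in> V \<union> {r}" shows "PP a b \<subseteq> V"
proof -
  have "anc a \<subseteq> V \<union> {r}" "anc b \<subseteq> V \<union> {r}" "r \<in> anc a" "r \<in> anc b"
    using anc_sub r_anc assms by auto
  then show ?thesis unfolding PP_def by blast
qed

lemma Pv_sub: assumes "e \<in> E" shows "Pv e \<subseteq> V"
proof -
  have "tail e \<in> V \<union> {r}" "head e \<in> V \<union> {r}" using ends assms by auto
  then show ?thesis unfolding Pv_def by (rule PP_sub)
qed

lemma PP_par: "v \<in> V \<Longrightarrow> PP (par v) v = {v}"
  unfolding PP_def using anc_par_diff[of v] self_anc[of v] by auto

lemma Pv_aedge: "v \<in> V \<Longrightarrow> Pv (aedge head A v) = {v}"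
  unfolding Pv_def tail_aedge using head_aedge PP_par by simp

lemma conn_par: assumes "v \<in> U" "U \<subseteq> V" shows "conn tail head (aedge head A ` U) (par v) v"
proof -
  have "aedge head A v \<in> aedge head A ` U" using assms by simp
  then have "conn tail head (aedge head A ` U) (tail (aedge head A v)) (head (aedge head A v))"
    by (rule conn_edge)
  moreover have "head (aedge head A v) = v" using head_aedge assms by blast
  ultimately show ?thesis unfolding tail_aedge by simp
qed

lemma conn_tree:
  assumes "a \<in> V \<union> {r}" "b \<in> V \<union> {r}" "PP a b \<subseteq> U" "U \<subseteq> V"
  shows "conn tail head (aedge head A ` U) a b"
  using assms
proof (induction "d a + d b" arbitrary: a b rule: less_induct)
  case less
  show ?case
  proof (cases "a = b")
    case True then show ?thesis by simp
  next
    case False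
    then have "a \<notin> anc b \<or> b \<notin> anc a" using anc_antisym less.prems by blast
    then show ?thesis
    proof
      assume nab: "a \<notin> anc b"
      have ar: "a \<noteq> r" using nab r_anc less.prems(2) by blast
      then have aV: "a \<in> V" using less.prems(1) by simp
      have aU: "a \<in> U" using less.prems(3) nab self_anc unfolding PP_def by blast
      have sub: "PP (par a) b \<subseteq> U"
        using less.prems(3) nab unfolding PP_def anc_par_diff[OF aV] by blast
      have "conn tail head (aedge head A ` U) (par a) b"
        by (rule less.hyps[OF _ par_in[OF aV] less.prems(2) sub less.prems(4)]) (simp add: d_par[OF aV])
      moreover have "conn tail head (aedge head A ` U) a (par a)"
        using conn_par[OF aU less.prems(4)] conn_sym by metis
      ultimately show ?thesis using conn_trans by metis
    next
      assume nba: "b \<notin> anc a"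
      have br: "b \<noteq> r" using nba r_anc less.prems(1) by blast
      then have bV: "b \<in> V" using less.prems(2) by simp
      have bU: "b \<in> U" using less.prems(3) nba self_anc unfolding PP_def by blast
      have sub: "PP a (par b) \<subseteq> U"
        using less.prems(3) nba unfolding PP_def anc_par_diff[OF bV] by blast
      have "conn tail head (aedge head A ` U) a (par b)"
        by (rule less.hyps[OF _ less.prems(1) par_in[OF bV] sub less.prems(4)]) (simp add: d_par[OF bV])
      moreover have "conn tail head (aedge head A ` U) (par b) b"
        using conn_par[OF bU less.prems(4)] by metis
      ultimately show ?thesis using conn_trans by metis
    qed
  qed
qed

lemma conn_tree_rev:
  assumes "conn tail head (aedge head A ` U) a b" "U \<subseteq> V"
  shows "PP a b \<subseteq> U"
  using assms(1)
proof (induction rule: rtranclp_induct)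
  case base then show ?case unfolding PP_def by simp
next
  case (step y z)
  from step(2) obtain f where f: "f \<in> aedge head A ` U" "{tail f, head f} = {y, z}"
    unfolding adj_def by blast
  then obtain u where u0: "u \<in> U" "f = aedge head A u" by blast
  have "head f = u" using u0 head_aedge assms(2) by blast
  then have u: "u \<in> U" "{par u, u} = {y, z}" using u0 f(2) tail_aedge by auto
  have uV: "u \<in> V" using u assms(2) by blast
  have "(y = par u \<and> z = u) \<or> (y = u \<and> z = par u)" using u(2) by (auto simp: doubleton_eq_iff)
  then have "PP y z = {u}" using PP_par[OF uV] PP_sym[of u "par u"] by auto
  moreover have "PP a z \<subseteq> PP a y \<union> PP y z" unfolding PP_def by blast
  ultimately have "PP a z \<subseteq> PP a y \<union> {u}" by simp
  then show ?case using step(3) u(1) by blast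
qed

lemma path_split:
  assumes a1: "a1 \<in> V \<union> {r}" and a2: "a2 \<in> V \<union> {r}" and s: "s \<in> anc a1" "s \<notin> anc a2"
  shows "s \<in> V" "conn tail head (aedge head A ` (PP a1 a2 - {s})) a1 s"
    "conn tail head (aedge head A ` (PP a1 a2 - {s})) (par s) a2"
proof -
  show sV: "s \<in> V" using s anc_sub[OF a1] r_anc[OF a2] by blast
  have UV: "PP a1 a2 - {s} \<subseteq> V" using PP_sub[OF a1 a2] by blast
  have sub1: "anc s \<subseteq> anc a1" using anc_trans[OF a1 s(1)] .
  have s_in: "s \<in> V \<union> {r}" using sV by simp
  have "PP a1 s \<subseteq> PP a1 a2 - {s}"
  proof
    fix u assume "u \<in> PP a1 s"
    then have u: "u \<in> anc a1" "u \<notin> anc s" using sub1 unfolding PP_def by auto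
    have "u \<noteq> s" using u(2) self_anc by blast
    moreover have "u \<notin> anc a2"
    proof
      assume ua2: "u \<in> anc a2"
      have "u \<in> anc s \<or> s \<in> anc u" using anc_chain[OF a1 u(1) s(1)] .
      then have "s \<in> anc u" using u(2) by blast
      then have "s \<in> anc a2" using anc_trans[OF a2 ua2] by blast
      then show False using s(2) by simp
    qed
    ultimately show "u \<in> PP a1 a2 - {s}" using u(1) unfolding PP_def by blast
  qed
  then show "conn tail head (aedge head A ` (PP a1 a2 - {s})) a1 s"
    using conn_tree[OF a1 s_in _ UV] by blast
  have ps: "anc (par s) = anc s - {s}" using anc_par_diff[OF sV] .
  have "PP (par s) a2 \<subseteq> PP a1 a2 - {s}"
  proof
    fix u assume "u \<in> PP (par s) a2"
    then consider "u \<in> anc s" "u \<noteq> s" "u \<notin> anc a2" | "u \<in> anc a2" "u \<notin> anc s - {s}"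
      unfolding PP_def ps by blast
    then show "u \<in> PP a1 a2 - {s}"
    proof cases
      case 1 then show ?thesis using sub1 unfolding PP_def by blast
    next
      case 2
      have us: "u \<noteq> s" using 2 s(2) by blast
      then have uns: "u \<notin> anc s" using 2 by blast
      have "u \<notin> anc a1"
      proof
        assume "u \<in> anc a1"
        then have "u \<in> anc s \<or> s \<in> anc u" using anc_chain[OF a1 _ s(1)] by blast
        then have "s \<in> anc u" using uns by blast
        then have "s \<in> anc a2" using anc_trans[OF a2 2(1)] by blast
        then show False using s(2) by simp
      qed
      then show ?thesis using 2(1) us unfolding PP_def by blast
    qed
  qed
  then show "conn tail head (aedge head A ` (PP a1 a2 - {s})) (par s) a2"
    using conn_tree[OF par_in[OF sV] a2 _ UV] by blast
qed

end

fun walk :: "('n \<Rightarrow> 'n \<Rightarrow> bool) \<Rightarrow> 'n list \<Rightarrow> bool" where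
  "walk R (x # y # xs) = (R x y \<and> walk R (y # xs))"
| "walk R _ = True"

fun wsum :: "('n \<Rightarrow> 'n \<Rightarrow> 'a::comm_monoid_add) \<Rightarrow> 'n list \<Rightarrow> 'a" where
  "wsum w (x # y # xs) = w x y + wsum w (y # xs)"
| "wsum w _ = 0"

definition cwalk :: "('n \<Rightarrow> 'n \<Rightarrow> bool) \<Rightarrow> 'n set \<Rightarrow> 'n list \<Rightarrow> bool" where
  "cwalk R N xs \<longleftrightarrow> 2 \<le> length xs \<and> hd xs = last xs \<and> walk R xs \<and> set xs \<subseteq> N"

lemma walk_append: "walk R (xs @ a # ys) \<longleftrightarrow> walk R (xs @ [a]) \<and> walk R (a # ys)"
proof (induction xs)
  case Nil then show ?case by (cases ys) auto
next
  case (Cons x xs) then show ?case by (cases xs) auto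
qed

lemma wsum_append: "wsum w (xs @ a # ys) = wsum w (xs @ [a]) + wsum w (a # ys)"
proof (induction xs)
  case Nil then show ?case by (cases ys) auto
next
  case (Cons x xs) then show ?case by (cases xs) (auto simp: add.assoc)
qed

lemma wsum_snoc: "xs \<noteq> [] \<Longrightarrow> wsum w (xs @ [y]) = wsum w xs + w (last xs) y"
proof (induction xs)
  case Nil then show ?case by simp
next
  case (Cons x xs) then show ?case by (cases xs) (auto simp: add.assoc)
qed

lemma walk_snoc: "xs \<noteq> [] \<Longrightarrow> walk R (xs @ [y]) \<longleftrightarrow> walk R xs \<and> R (last xs) y"
proof (induction xs)
  case Nil then show ?case by simp
next
  case (Cons x xs) then show ?case by (cases xs) auto
qed

lemma wsum_vertex: "wsum (\<lambda>a b. g a) xs = sum_list (map g (butlast xs))"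
proof (induction xs)
  case Nil then show ?case by simp
next
  case (Cons x xs) then show ?case by (cases xs) auto
qed

lemma walk_nth: "walk R xs \<longleftrightarrow> (\<forall>i. Suc i < length xs \<longrightarrow> R (xs ! i) (xs ! Suc i))"
proof (induction xs)
  case Nil then show ?case by simp
next
  case (Cons x xs)
  show ?case
  proof (cases xs)
    case Nil then show ?thesis by simp
  next
    case (Cons y ys)
    have "walk R (x # xs) \<longleftrightarrow> R x y \<and> walk R xs" using Cons by simp
    also have "\<dots> \<longleftrightarrow> (\<forall>i. Suc i < length (x # xs) \<longrightarrow> R ((x # xs) ! i) ((x # xs) ! Suc i))"
      using Cons.IH Cons by (auto simp: less_Suc_eq_0_disj nth_Cons split: nat.splits)
    finally show ?thesis .
  qed
qed

lemma wsum_nth: "wsum w xs = (\<Sum>i < length xs - 1. w (xs ! i) (xs ! Suc i))"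
proof (induction xs)
  case Nil then show ?case by simp
next
  case (Cons x xs)
  show ?case
  proof (cases xs)
    case Nil then show ?thesis by simp
  next
    case (Cons y ys)
    have "wsum w (x # xs) = w x y + wsum w xs" using Cons by simp
    also have "\<dots> = w x y + (\<Sum>i < length xs - 1. w (xs ! i) (xs ! Suc i))" using Cons.IH by simp
    also have "\<dots> = (\<Sum>i < length (x # xs) - 1. w ((x # xs) ! i) ((x # xs) ! Suc i))"
      using Cons by (simp add: sum.lessThan_Suc_shift del: sum.lessThan_Suc)
    finally show ?thesis .
  qed
qed

lemma cw_split:
  assumes cw: "cwalk R N xs" and nd: "\<not> distinct (butlast xs)"
  shows "\<exists>z1 z2. cwalk R N z1 \<and> cwalk R N z2 \<and> length z1 < length xs \<and> length z2 < length xs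
     \<and> wsum w xs = wsum w z1 + wsum w z2"
proof -
  obtain as a bs cs where bl: "butlast xs = as @ [a] @ bs @ [a] @ cs"
    using not_distinct_decomp[OF nd] by blast
  have ne: "xs \<noteq> []" using cw unfolding cwalk_def by auto
  define l where "l = last xs"
  have "xs = butlast xs @ [l]" unfolding l_def using append_butlast_last_id[OF ne] by simp
  also have "\<dots> = as @ a # bs @ a # cs @ [l]" unfolding bl by simp
  finally have xs: "xs = as @ a # bs @ a # cs @ [l]" .
  define z1 where "z1 = a # bs @ [a]"
  define z2 where "z2 = as @ a # cs @ [l]"
  have xs2: "xs = (as @ a # bs) @ a # (cs @ [l])" using xs by simp
  have wxs: "walk R xs" "hd xs = last xs" "set xs \<subseteq> N" using cw unfolding cwalk_def by auto
  have w1: "walk R (as @ a # bs @ [a])" "walk R (a # cs @ [l])"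
    using wxs(1) unfolding xs2 walk_append[of R "as @ a # bs" a "cs @ [l]"] by auto
  have w2: "walk R (as @ [a])" "walk R (a # bs @ [a])"
    using w1(1) walk_append[of R as a "bs @ [a]"] by auto
  have s1: "wsum w xs = wsum w (as @ a # bs @ [a]) + wsum w (a # cs @ [l])"
    unfolding xs2 wsum_append[of w "as @ a # bs" a "cs @ [l]"] by simp
  have s2: "wsum w (as @ a # bs @ [a]) = wsum w (as @ [a]) + wsum w (a # bs @ [a])"
    using wsum_append[of w as a "bs @ [a]"] by simp
  have s3: "wsum w z2 = wsum w (as @ [a]) + wsum w (a # cs @ [l])"
    unfolding z2_def using wsum_append[of w as a "cs @ [l]"] by simp
  have "cwalk R N z1" unfolding cwalk_def z1_def using w2(2) wxs(3) xs by auto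
  moreover have "cwalk R N z2"
  proof -
    have "walk R z2" unfolding z2_def using walk_append[of R as a "cs @ [l]"] w2(1) w1(2) by simp
    moreover have "hd z2 = last z2"
    proof (cases as)
      case Nil
      have "hd xs = a" using xs Nil by simp
      then show ?thesis using wxs(2) unfolding z2_def l_def using Nil by simp
    next
      case (Cons b bs')
      have "hd xs = b" using xs Cons by simp
      then show ?thesis using wxs(2) unfolding z2_def l_def using Cons by simp
    qed
    moreover have "set z2 \<subseteq> N" using wxs(3) unfolding z2_def xs by auto
    ultimately show ?thesis unfolding cwalk_def z2_def by auto
  qed
  moreover have "length z1 < length xs" "length z2 < length xs" unfolding z1_def z2_def xs by auto
  moreover have "wsum w xs = wsum w z1 + wsum w z2"
    unfolding s1 s2 s3 z1_def by (simp add: ac_simps)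
  ultimately show ?thesis by blast
qed

lemma walk_shorten:
  fixes w :: "'n \<Rightarrow> 'n \<Rightarrow> 'a::ordered_ab_group_add"
  assumes "walk R xs" "xs \<noteq> []" "set xs \<subseteq> N" "finite N"
    and neg: "\<And>z. cwalk R N z \<Longrightarrow> wsum w z \<le> 0"
  shows "\<exists>ys. walk R ys \<and> ys \<noteq> [] \<and> set ys \<subseteq> N \<and> last ys = last xs \<and> length ys \<le> card N
     \<and> wsum w xs \<le> wsum w ys"
  using assms(1-3)
proof (induction "length xs" arbitrary: xs rule: less_induct)
  case less
  show ?case
  proof (cases "distinct xs")
    case True
    then have "length xs \<le> card N" using less.prems(3) assms(4)
      by (metis card_mono distinct_card)
    then show ?thesis using less.prems by blast
  next
    case False
    obtain as a bs cs where xs: "xs = as @ [a] @ bs @ [a] @ cs"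
      using not_distinct_decomp[OF False] by blast
    define ys where "ys = as @ a # cs"
    have xs2: "xs = (as @ a # bs) @ a # cs" using xs by simp
    have w1: "walk R (as @ a # bs @ [a])" "walk R (a # cs)"
      using less.prems(1) unfolding xs2 walk_append[of R "as @ a # bs" a cs] by auto
    have w2: "walk R (as @ [a])" "walk R (a # bs @ [a])"
      using w1(1) walk_append[of R as a "bs @ [a]"] by auto
    have s1: "wsum w xs = wsum w (as @ a # bs @ [a]) + wsum w (a # cs)"
      unfolding xs2 wsum_append[of w "as @ a # bs" a cs] by simp
    have s2: "wsum w (as @ a # bs @ [a]) = wsum w (as @ [a]) + wsum w (a # bs @ [a])"
      using wsum_append[of w as a "bs @ [a]"] by simp
    have s3: "wsum w ys = wsum w (as @ [a]) + wsum w (a # cs)"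
      unfolding ys_def using wsum_append[of w as a cs] by simp
    have "cwalk R N (a # bs @ [a])" unfolding cwalk_def using w2(2) less.prems(3) xs by auto
    then have z: "wsum w (a # bs @ [a]) \<le> 0" by (rule neg)
    have wy: "walk R ys" unfolding ys_def using walk_append[of R as a cs] w2(1) w1(2) by simp
    have ly: "length ys < length xs" unfolding ys_def xs by simp
    have sy: "set ys \<subseteq> N" using less.prems(3) unfolding ys_def xs by auto
    have lasty: "last ys = last xs" unfolding ys_def xs by (cases cs) auto
    have "wsum w xs \<le> wsum w ys" using s1 s2 s3 z by (simp add: add_mono)
    moreover obtain zs where "walk R zs \<and> zs \<noteq> [] \<and> set zs \<subseteq> N \<and> last zs = last ys \<and>
        length zs \<le> card N \<and> wsum w ys \<le> wsum w zs"
      using less.hyps[OF ly wy _ sy] unfolding ys_def by auto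
    ultimately show ?thesis using lasty order_trans by metis
  qed
qed

lemma bellman_ford:
  fixes w :: "'n \<Rightarrow> 'n \<Rightarrow> 'a::linordered_ab_group_add"
  assumes fin: "finite N" and neg: "\<And>z. cwalk R N z \<Longrightarrow> wsum w z \<le> 0"
  shows "\<exists>p. \<forall>x\<in>N. \<forall>y\<in>N. R x y \<longrightarrow> p x + w x y \<le> p y"
proof -
  define W where "W y = {xs. walk R xs \<and> xs \<noteq> [] \<and> set xs \<subseteq> N \<and> last xs = y \<and> length xs \<le> card N}" for y
  define p where "p y = Max (wsum w ` W y)" for y
  have finW: "finite (W y)" for y
  proof -
    have "W y \<subseteq> {xs. set xs \<subseteq> N \<and> length xs \<le> card N}" unfolding W_def by auto
    then show ?thesis using finite_lists_length_le[OF fin] finite_subset by blast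
  qed
  have ex: "[y] \<in> W y" if "y \<in> N" for y
  proof -
    have "card N \<ge> 1" using that fin by (metis One_nat_def card_0_eq empty_iff less_one not_le)
    then show ?thesis unfolding W_def using that by simp
  qed
  have "\<forall>x\<in>N. \<forall>y\<in>N. R x y \<longrightarrow> p x + w x y \<le> p y"
  proof (intro ballI impI)
    fix x y assume x: "x \<in> N" and y: "y \<in> N" and R: "R x y"
    have "p x \<in> wsum w ` W x" unfolding p_def using finW ex[OF x] by (intro Max_in) auto
    then obtain zs where zs: "zs \<in> W x" "wsum w zs = p x" by auto
    have zs1: "walk R zs" "zs \<noteq> []" "set zs \<subseteq> N" "last zs = x" using zs(1) unfolding W_def by auto
    have wz: "walk R (zs @ [y])" using walk_snoc[OF zs1(2)] zs1 R by simp
    obtain ys where ys: "walk R ys" "ys \<noteq> []" "set ys \<subseteq> N" "last ys = y" "length ys \<le> card N"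
      "wsum w (zs @ [y]) \<le> wsum w ys"
      using walk_shorten[OF wz _ _ fin neg] zs1(3) y by auto
    have "ys \<in> W y" unfolding W_def using ys by auto
    then have "wsum w ys \<le> p y" unfolding p_def using finW by (intro Max_ge) auto
    moreover have "wsum w (zs @ [y]) = p x + w x y" using wsum_snoc[OF zs1(2), of w y] zs(2) zs1(4) by simp
    ultimately show "p x + w x y \<le> p y" using ys(6) by simp
  qed
  then show ?thesis by blast
qed

lemma walk_mono_on: "walk R z \<Longrightarrow> (\<And>a b. a \<in> set z \<Longrightarrow> b \<in> set z \<Longrightarrow> R a b \<Longrightarrow> R' a b) \<Longrightarrow> walk R' z"
  by (induction R z rule: walk.induct) auto

lemma wsum_mono_on:
  fixes f g :: "'n \<Rightarrow> 'n \<Rightarrow> 'a::ordered_comm_monoid_add"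
  shows "walk R z \<Longrightarrow> (\<And>a b. a \<in> set z \<Longrightarrow> b \<in> set z \<Longrightarrow> R a b \<Longrightarrow> f a b \<le> g a b) \<Longrightarrow> wsum f z \<le> wsum g z"
  by (induction R z rule: walk.induct) (auto intro!: add_mono)

lemma wsum_of_int: "wsum (\<lambda>a b. real_of_int (f a b)) z = real_of_int (wsum f z)"
  by (induction f z rule: wsum.induct) auto

lemma wsum_minus_const: "wsum (\<lambda>a b. f a b - k) z = wsum f z - k * real (length z - 1)"
proof (induction f z rule: wsum.induct)
  case (1 w x y xs) then show ?case by (simp add: algebra_simps)
qed auto

locale pop_setup = arb_tree V r E tail head A
  for V :: "'v set" and r :: 'v and E :: "'e set" and tail head :: "'e \<Rightarrow> 'v" and A :: "'e set" +
  fixes pref :: "'v \<Rightarrow> 'e \<Rightarrow> 'e \<Rightarrow> bool"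
  assumes irr: "\<forall>v \<in> V. \<forall>e \<in> E. head e = v \<longrightarrow> \<not> pref v e e"
    and trans: "\<forall>v \<in> V. \<forall>e \<in> E. \<forall>f \<in> E. \<forall>g \<in> E.
                  head e = v \<and> head f = v \<and> head g = v \<and> pref v e f \<and> pref v f g \<longrightarrow> pref v e g"
begin

abbreviation w :: "'e \<Rightarrow> int" where "w e \<equiv> wt head pref A e"

lemma w_A: assumes "v \<in> V" shows "w (aedge head A v) = 0"
proof -
  have a: "aedge head A v \<in> E" "head (aedge head A v) = v" using aedge_in[OF assms] A_sub by auto
  have "\<not> pref v (aedge head A v) (aedge head A v)" using irr assms a by blast
  then show ?thesis unfolding wt_def Let_def a(2) by simp
qed

definition arcD :: "'v \<Rightarrow> 'v \<Rightarrow> bool" where "arcD v u \<longleftrightarrow> (\<exists>e\<in>E. head e = v \<and> u \<in> Pv e)"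

definition om :: "'v \<Rightarrow> 'v \<Rightarrow> int" where "om v u = Max {w e | e. e \<in> E \<and> head e = v \<and> u \<in> Pv e}"

lemma om_fin: "finite {w e | e. e \<in> E \<and> head e = v \<and> u \<in> Pv e}"
proof -
  have "{w e | e. e \<in> E \<and> head e = v \<and> u \<in> Pv e} \<subseteq> w ` E" by auto
  then show ?thesis using finE finite_subset by blast
qed

lemma om_ge: "e \<in> E \<Longrightarrow> u \<in> Pv e \<Longrightarrow> w e \<le> om (head e) u"
  unfolding om_def by (rule Max_ge[OF om_fin]) auto

lemma om_ex: assumes "arcD v u" shows "\<exists>e\<in>E. head e = v \<and> u \<in> Pv e \<and> w e = om v u"
proof -
  have ne: "{w e | e. e \<in> E \<and> head e = v \<and> u \<in> Pv e} \<noteq> {}" using assms unfolding arcD_def by auto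
  have "om v u \<in> {w e | e. e \<in> E \<and> head e = v \<and> u \<in> Pv e}" unfolding om_def by (rule Max_in[OF om_fin ne])
  then show ?thesis by auto
qed

definition sumwt :: "'e set \<Rightarrow> int" where "sumwt A' = (\<Sum>v\<in>V. w (aedge head A' v))"

end

locale exch = pop_setup V r E tail head A pref
  for V :: "'v set" and r :: 'v and E :: "'e set" and tail head :: "'e \<Rightarrow> 'v" and A :: "'e set"
    and pref :: "'v \<Rightarrow> 'e \<Rightarrow> 'e \<Rightarrow> bool" +
  fixes m :: nat and x :: "nat \<Rightarrow> 'v"
  assumes m_pos: "0 < m" and xinj: "inj_on x {..<m}" and xV: "\<forall>i<m. x i \<in> V"
    and arcs: "\<forall>i<m. arcD (x i) (x (Suc i mod m))"
    and pos: "0 < (\<Sum>i<m. om (x i) (x (Suc i mod m)))"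
    and minim: "\<forall>z. cwalk arcD V z \<and> length z \<le> m \<longrightarrow> wsum om z \<le> 0"
begin

definition S where "S = x ` {..<m}"
definition idx where "idx b = inv_into {..<m} x b"
definition sg where "sg b = x (Suc (idx b) mod m)"

lemma idx_x: "i < m \<Longrightarrow> idx (x i) = i"
  unfolding idx_def using xinj by (simp add: inv_into_f_f)

lemma x_idx: "b \<in> S \<Longrightarrow> x (idx b) = b" and idx_lt: "b \<in> S \<Longrightarrow> idx b < m"
  unfolding idx_def S_def using xinj by (auto simp: f_inv_into_f inv_into_f_f)

lemma S_sub: "S \<subseteq> V" unfolding S_def using xV by auto

lemma finS: "finite S" unfolding S_def by simp

lemma card_S: "card S = m" unfolding S_def using xinj by (simp add: card_image)

lemma Suc_mod_lt: "Suc i mod m < m" using m_pos by simp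

lemma xS: "i < m \<Longrightarrow> x i \<in> S" unfolding S_def by simp

lemma sg_x: "i < m \<Longrightarrow> sg (x i) = x (Suc i mod m)" unfolding sg_def by (simp add: idx_x)

lemma sg_S: "b \<in> S \<Longrightarrow> sg b \<in> S" unfolding sg_def using Suc_mod_lt xS by simp

lemma sg_inj: "inj_on sg S"
proof (rule inj_onI)
  fix a b assume a: "a \<in> S" and b: "b \<in> S" and eq: "sg a = sg b"
  then have "Suc (idx a) mod m = Suc (idx b) mod m"
    unfolding sg_def using xinj Suc_mod_lt by (simp add: inj_on_eq_iff)
  then have "idx a = idx b" using idx_lt[OF a] idx_lt[OF b]
    by (metis Suc_lessI mod_Suc mod_less Suc_inject less_not_refl nat.distinct(1) mod_self)
  then show "a = b" using x_idx a b by metis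
qed

lemma sg_surj: "sg ` S = S"
  using sg_inj sg_S finS by (meson card_image card_subset_eq image_subsetI)

definition ech where "ech i = (SOME e. e \<in> E \<and> head e = x i \<and> x (Suc i mod m) \<in> Pv e \<and> w e = om (x i) (x (Suc i mod m)))"

lemma ech: assumes "i < m"
  shows "ech i \<in> E \<and> head (ech i) = x i \<and> x (Suc i mod m) \<in> Pv (ech i) \<and> w (ech i) = om (x i) (x (Suc i mod m))"
proof -
  have "\<exists>e. e \<in> E \<and> head e = x i \<and> x (Suc i mod m) \<in> Pv e \<and> w e = om (x i) (x (Suc i mod m))"
    using om_ex arcs assms by blast
  then show ?thesis unfolding ech_def by (rule someI_ex)
qed

definition eb where "eb b = ech (idx b)"

lemma eb: assumes "b \<in> S" shows "eb b \<in> E" "head (eb b) = b" "sg b \<in> Pv (eb b)" "w (eb b) = om b (sg b)"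
  using ech[OF idx_lt[OF assms]] x_idx[OF assms] unfolding eb_def sg_def by auto

definition c where "c b = w (eb b)"
definition W where "W = (\<Sum>b\<in>S. c b)"

lemma W_eq: "W = (\<Sum>i<m. om (x i) (x (Suc i mod m)))"
proof -
  have "W = (\<Sum>i<m. c (x i))" unfolding W_def S_def using xinj by (simp add: sum.reindex)
  also have "\<dots> = (\<Sum>i<m. om (x i) (x (Suc i mod m)))"
    by (rule sum.cong) (auto simp: c_def eb(4)[OF xS] sg_x)
  finally show ?thesis .
qed

lemma W_pos: "0 < W" using W_eq pos by simp

definition mu :: real where "mu = real_of_int W / real m"

lemma mu_pos: "0 < mu" unfolding mu_def using W_pos m_pos by simp

lemma m_mu: "real m * mu = real_of_int W" unfolding mu_def using m_pos by simp

definition arcH where "arcH b u \<longleftrightarrow> u \<in> Pv (eb b)"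

definition g :: "'v \<Rightarrow> real" where "g b = real_of_int (c b) - mu"

lemma sum_g: "(\<Sum>b\<in>S. g b) = 0"
proof -
  have "(\<Sum>b\<in>S. real_of_int (c b)) = real_of_int W" unfolding W_def by simp
  then show ?thesis unfolding g_def using m_mu card_S by (simp add: sum_subtractf)
qed


lemma H_D_walk: assumes "cwalk arcH S z" shows "cwalk arcD V z"
proof -
  have wz: "walk arcH z" "set z \<subseteq> S" using assms unfolding cwalk_def by auto
  have "walk arcD z" using wz(1)
  proof (rule walk_mono_on)
    fix a b assume "a \<in> set z" "b \<in> set z" "arcH a b"
    then have aS: "a \<in> S" and b: "b \<in> Pv (eb a)" using wz(2) arcH_def by auto
    show "arcD a b" unfolding arcD_def using eb(1,2)[OF aS] b by blast
  qed
  then show ?thesis using assms S_sub unfolding cwalk_def by auto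
qed

lemma H_short:
  assumes cw: "cwalk arcH S z" and len: "length z \<le> m"
  shows "wsum (\<lambda>a b. g a) z < 0"
proof -
  have wz: "walk arcH z" "set z \<subseteq> S" "2 \<le> length z" using cw unfolding cwalk_def by auto
  have "wsum (\<lambda>a b. real_of_int (c a)) z \<le> wsum (\<lambda>a b. real_of_int (om a b)) z"
  proof (rule wsum_mono_on[OF wz(1)])
    fix a b assume a: "a \<in> set z" and "arcH a b"
    then have "b \<in> Pv (eb a)" unfolding arcH_def by simp
    moreover have aS: "a \<in> S" using a wz(2) by auto
    ultimately have "w (eb a) \<le> om (head (eb a)) b" using om_ge eb(1) by blast
    then show "real_of_int (c a) \<le> real_of_int (om a b)" unfolding c_def using eb(2)[OF aS] by simp
  qed
  also have "\<dots> = real_of_int (wsum om z)" by (rule wsum_of_int)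
  also have "\<dots> \<le> 0" using minim H_D_walk[OF cw] len by simp
  finally have le: "wsum (\<lambda>a b. real_of_int (c a)) z \<le> 0" .
  have "wsum (\<lambda>a b. g a) z = wsum (\<lambda>a b. real_of_int (c a)) z - mu * real (length z - 1)"
    unfolding g_def by (rule wsum_minus_const)
  moreover have "0 < mu * real (length z - 1)" using mu_pos wz(3) by simp
  ultimately show ?thesis using le by linarith
qed

lemma H_all: "cwalk arcH S z \<Longrightarrow> wsum (\<lambda>a b. g a) z \<le> 0"
proof (induction "length z" arbitrary: z rule: less_induct)
  case less
  show ?case
  proof (cases "length z \<le> m")
    case True then show ?thesis using H_short[OF less.prems] by simp
  next
    case long: False
    show ?thesis
    proof (cases "distinct (butlast z)")
      case False
      obtain z1 z2 where z: "cwalk arcH S z1" "cwalk arcH S z2" "length z1 < length z" "length z2 < length z"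
        "wsum (\<lambda>a b. g a) z = wsum (\<lambda>a b. g a) z1 + wsum (\<lambda>a b. g a) z2"
        using cw_split[OF less.prems False] by blast
      have "wsum (\<lambda>a b. g a) z1 \<le> 0" using less.hyps[OF z(3) z(1)] .
      moreover have "wsum (\<lambda>a b. g a) z2 \<le> 0" using less.hyps[OF z(4) z(2)] .
      ultimately show ?thesis using z(5) by simp
    next
      case True
      have sz: "set (butlast z) \<subseteq> S" using less.prems unfolding cwalk_def by (meson in_set_butlastD subset_iff)
      have "card (set (butlast z)) = length z - 1" using distinct_card[OF True] by simp
      also have "\<dots> \<ge> card S" using long card_S by simp
      finally have "set (butlast z) = S" using sz finS by (simp add: card_seteq)
      then have "wsum (\<lambda>a b. g a) z = (\<Sum>b\<in>S. g b)"
        unfolding wsum_vertex using True by (metis sum_list_distinct_conv_sum_set)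
      then show ?thesis using sum_g by simp
    qed
  qed
qed

definition p :: "'v \<Rightarrow> real" where "p = (SOME p. \<forall>b\<in>S. \<forall>u\<in>S. arcH b u \<longrightarrow> p b + g b \<le> p u)"

lemma p_prop: "b \<in> S \<Longrightarrow> u \<in> S \<Longrightarrow> arcH b u \<Longrightarrow> p b + g b \<le> p u"
proof -
  have "\<exists>p. \<forall>b\<in>S. \<forall>u\<in>S. arcH b u \<longrightarrow> p b + g b \<le> p u"
    using bellman_ford[of S arcH "\<lambda>a b. g a", OF finS] H_all by blast
  then have "\<forall>b\<in>S. \<forall>u\<in>S. arcH b u \<longrightarrow> p b + g b \<le> p u" unfolding p_def by (rule someI_ex)
  then show "b \<in> S \<Longrightarrow> u \<in> S \<Longrightarrow> arcH b u \<Longrightarrow> p b + g b \<le> p u" by blast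
qed

lemma arcH_sg: "b \<in> S \<Longrightarrow> arcH b (sg b)" unfolding arcH_def using eb(3) by simp


lemma sum_S: "(\<Sum>i<m. f (x i)) = (\<Sum>b\<in>S. f b)"
  unfolding S_def using xinj by (simp add: sum.reindex)

lemma tight: assumes i: "i < m" shows "p (x (Suc i mod m)) = p (x i) + g (x i)"
proof -
  have ge: "p (x i) + g (x i) \<le> p (x (Suc i mod m))" if "i < m" for i
    using p_prop[OF xS[OF that] sg_S[OF xS[OF that]] arcH_sg[OF xS[OF that]]] sg_x[OF that] by simp
  have s1: "(\<Sum>i<m. p (x (Suc i mod m))) = (\<Sum>b\<in>S. p b)"
  proof -
    have "(\<Sum>i<m. p (x (Suc i mod m))) = (\<Sum>i<m. p (sg (x i)))" by (rule sum.cong) (auto simp: sg_x)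
    also have "\<dots> = (\<Sum>b\<in>S. p (sg b))" by (rule sum_S)
    also have "\<dots> = (\<Sum>b\<in>sg ` S. p b)" using sg_inj by (simp add: sum.reindex)
    also have "\<dots> = (\<Sum>b\<in>S. p b)" using sg_surj by simp
    finally show ?thesis .
  qed
  have "(\<Sum>i<m. p (x (Suc i mod m)) - (p (x i) + g (x i))) =
      (\<Sum>i<m. p (x (Suc i mod m))) - (\<Sum>i<m. p (x i)) - (\<Sum>i<m. g (x i))"
    by (simp add: sum_subtractf sum.distrib)
  also have "\<dots> = 0" unfolding s1 sum_S[of p] sum_S[of g] sum_g by simp
  finally have z: "(\<Sum>i<m. p (x (Suc i mod m)) - (p (x i) + g (x i))) = 0" .
  have "\<forall>i\<in>{..<m}. p (x (Suc i mod m)) - (p (x i) + g (x i)) = 0"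
    using iffD1[OF sum_nonneg_eq_0_iff z] ge by auto
  then show ?thesis using i by auto
qed

lemma tight_chord:
  assumes b: "b \<in> S" and u: "u \<in> S" and bu: "arcH b u" and nsg: "u \<noteq> sg b" and eq: "p u = p b + g b"
  shows False
proof -
  define i where "i = idx b"
  define j where "j = idx u"
  have i: "i < m" "x i = b" unfolding i_def using idx_lt[OF b] x_idx[OF b] by auto
  have j: "j < m" "x j = u" unfolding j_def using idx_lt[OF u] x_idx[OF u] by auto
  define d where "d = (i + m - j) mod m"
  have jd: "(j + d) mod m = i"
  proof -
    have "(j + d) mod m = (j + (i + m - j)) mod m" unfolding d_def by (simp add: mod_add_right_eq)
    also have "j + (i + m - j) = i + m" using j(1) by simp
    finally show ?thesis using i(1) by simp
  qed
  have dlt: "d < m" unfolding d_def using m_pos by simp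
  have dne: "d \<noteq> m - 1"
  proof
    assume dm: "d = m - 1"
    have "Suc i mod m = Suc ((j + d) mod m) mod m" using jd by simp
    also have "\<dots> = Suc (j + d) mod m" by (simp add: mod_Suc_eq)
    also have "Suc (j + d) = j + m" using dm m_pos by simp
    finally have "Suc i mod m = j" using j(1) by simp
    then have "sg b = u" using sg_x[OF i(1)] i(2) j(2) by simp
    then show False using nsg by simp
  qed
  then have d2: "d + 2 \<le> m" using dlt by simp
  define zs where "zs = x i # map (\<lambda>k. x ((j + k) mod m)) [0..<Suc d]"
  have lz: "length zs = d + 2" unfolding zs_def by simp
  have zs0: "zs ! 0 = x i" unfolding zs_def by simp
  have zsS: "zs ! Suc k = x ((j + k) mod m)" if "k \<le> d" for k
    unfolding zs_def using that by (simp del: upt_Suc)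
  have xmod: "x ((j + k) mod m) \<in> S" for k using xS m_pos by simp
  have walkz: "walk arcH zs"
    unfolding walk_nth
  proof (intro allI impI)
    fix t assume t: "Suc t < length zs"
    show "arcH (zs ! t) (zs ! Suc t)"
    proof (cases t)
      case 0
      then show ?thesis using zs0 zsS[of 0] j i bu by simp
    next
      case (Suc k)
      have k: "k < d" using t Suc lz by simp
      define a where "a = (j + k) mod m"
      have a: "a < m" unfolding a_def using m_pos by simp
      have "zs ! t = x a" unfolding Suc a_def using zsS k by simp
      moreover have "zs ! Suc t = x (Suc a mod m)" unfolding Suc a_def using zsS[of "Suc k"] k
        by (simp add: mod_Suc_eq)
      ultimately show ?thesis using arcH_sg[OF xS[OF a]] sg_x[OF a] by simp
    qed
  qed
  have lastz: "last zs = x i" unfolding zs_def using jd by simp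
  have setz: "set zs \<subseteq> S" unfolding zs_def using xS[OF i(1)] xmod by auto
  have cw: "cwalk arcH S zs" unfolding cwalk_def using lz walkz lastz setz zs0
    by (simp add: hd_conv_nth zs_def)
  have neg: "wsum (\<lambda>a b. g a) zs < 0" using H_short[OF cw] lz d2 by simp
  have bl: "butlast zs = x i # map (\<lambda>k. x ((j + k) mod m)) [0..<d]"
    unfolding zs_def by (simp add: map_butlast[symmetric] del: upt_Suc) (simp)
  have "wsum (\<lambda>a b. g a) zs = g (x i) + (\<Sum>k<d. g (x ((j + k) mod m)))"
    unfolding wsum_vertex bl by (simp add: interv_sum_list_conv_sum_set_nat atLeast0LessThan)
  also have "(\<Sum>k<d. g (x ((j + k) mod m))) = (\<Sum>k<d. p (x ((j + Suc k) mod m)) - p (x ((j + k) mod m)))"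
  proof (rule sum.cong)
    fix k assume "k \<in> {..<d}"
    have a: "(j + k) mod m < m" using m_pos by simp
    have "p (x (Suc ((j + k) mod m) mod m)) = p (x ((j + k) mod m)) + g (x ((j + k) mod m))"
      by (rule tight[OF a])
    then show "g (x ((j + k) mod m)) = p (x ((j + Suc k) mod m)) - p (x ((j + k) mod m))"
      by (simp add: mod_Suc_eq)
  qed simp
  also have "\<dots> = p (x ((j + d) mod m)) - p (x ((j + 0) mod m))"
    using sum_lessThan_telescope[of "\<lambda>k. p (x ((j + k) mod m))" d] by simp
  also have "\<dots> = p b - p u" using jd i j by simp
  finally have "wsum (\<lambda>a b. g a) zs = 0" using i(2) eq by simp
  then show False using neg by simp
qed

lemma kappa_lt:
  assumes b: "b \<in> S" and b': "b' \<in> S" and ne: "b \<noteq> b'" and arc: "arcH b (sg b')"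
  shows "p (sg b) < p (sg b')"
proof -
  have t: "p (sg b) = p b + g b" using tight[OF idx_lt[OF b]] x_idx[OF b] sg_x[OF idx_lt[OF b]] by simp
  have le: "p b + g b \<le> p (sg b')" using p_prop[OF b sg_S[OF b'] arc] .
  have "sg b' \<noteq> sg b" using sg_inj b b' ne by (metis inj_on_eq_iff)
  then have "p (sg b') \<noteq> p b + g b" using tight_chord[OF b sg_S[OF b'] arc] by auto
  then show ?thesis using t le by simp
qed

end

context exch
begin

lemma eb_notA: assumes b: "b \<in> S" shows "eb b \<notin> A"
proof
  assume ebA: "eb b \<in> A"
  have bV: "b \<in> V" using b S_sub by auto
  have "eb b = aedge head A b" using aedge_eq[OF ebA] eb(2)[OF b] by simp
  then have "Pv (eb b) = {b}" using Pv_aedge[OF bV] by simp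
  then have sgb: "sg b = b" using eb(3)[OF b] by simp
  define i where "i = idx b"
  have i: "i < m" "x i = b" unfolding i_def using idx_lt[OF b] x_idx[OF b] by auto
  have "x (Suc i mod m) = x i" using sgb sg_x[OF i(1)] i(2) by simp
  then have "Suc i mod m = i" using xinj Suc_mod_lt i(1) by (simp add: inj_on_eq_iff)
  then have m1: "m = 1"
  proof (cases "Suc i < m")
    case True then show ?thesis using \<open>Suc i mod m = i\<close> by simp
  next
    case False
    then have "Suc i = m" using i(1) by simp
    then show ?thesis using \<open>Suc i mod m = i\<close> by simp
  qed
  then have "S = {b}" unfolding S_def using i by auto
  then have "W = c b" unfolding W_def by simp
  also have "c b = 0" unfolding c_def using \<open>eb b = aedge head A b\<close> w_A[OF bV] by simp
  finally show False using W_pos by simp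
qed

definition AX where "AX X = (A - (\<lambda>b. aedge head A (sg b)) ` X) \<union> eb ` X"

lemma AX_acyc: "X \<subseteq> S \<Longrightarrow> uacyclic tail head (AX X)"
proof (induction "card X" arbitrary: X rule: less_induct)
  case less
  show ?case
  proof (cases "X = {}")
    case True
    then show ?thesis unfolding AX_def using A_acyc by simp
  next
    case False
    have finX: "finite X" using less.prems finS finite_subset by blast
    have "Max ((\<lambda>b. p (sg b)) ` X) \<in> (\<lambda>b. p (sg b)) ` X" using finX False by (intro Max_in) auto
    then obtain b where bX: "b \<in> X" and bmax0: "p (sg b) = Max ((\<lambda>b. p (sg b)) ` X)" by auto
    have bmax: "p (sg b') \<le> p (sg b)" if "b' \<in> X" for b'
      unfolding bmax0 using finX that by (intro Max_ge) auto
    have bS: "b \<in> S" using bX less.prems by auto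
    define X' where "X' = X - {b}"
    have X'S: "X' \<subseteq> S" using less.prems X'_def by auto
    have cX': "card X' < card X" unfolding X'_def by (rule card_Diff1_less[OF finX bX])
    have IH: "uacyclic tail head (AX X')" using less.hyps[OF cX' X'S] .
    define sb where "sb = sg b"
    have sbS: "sb \<in> S" unfolding sb_def using sg_S[OF bS] .
    have sbV: "sb \<in> V" using sbS S_sub by auto
    define f where "f = aedge head A sb"
    define e where "e = eb b"
    have fA: "f \<in> A" unfolding f_def using aedge_in[OF sbV] by simp
    have eA: "e \<notin> A" unfolding e_def using eb_notA[OF bS] .
    have ebX': "eb b'' \<notin> A" if "b'' \<in> X'" for b'' using eb_notA X'S that by auto
    have fnot: "f \<notin> (\<lambda>b. aedge head A (sg b)) ` X'"
    proof
      assume "f \<in> (\<lambda>b. aedge head A (sg b)) ` X'"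
      then obtain b'' where b'': "b'' \<in> X'" "f = aedge head A (sg b'')" by auto
      have b''S: "b'' \<in> S" using b'' X'S by auto
      have sgV: "sg b'' \<in> V" using sg_S[OF b''S] S_sub by auto
      have "sg b'' = sb" using inj_onD[OF aedge_inj _ sgV sbV] b''(2) unfolding f_def by simp
      then have "b'' = b" using inj_onD[OF sg_inj _ b''S bS] unfolding sb_def by simp
      then show False using b''(1) X'_def by simp
    qed
    have fT: "f \<in> AX X'" unfolding AX_def using fA fnot by simp
    have eT: "e \<notin> AX X'"
    proof
      assume "e \<in> AX X'"
      then have "e \<in> eb ` X'" unfolding AX_def using eA by simp
      then obtain b'' where "b'' \<in> X'" "e = eb b''" by auto
      then have "b'' = b" using eb(2)[of b''] eb(2)[OF bS] X'S unfolding e_def by auto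
      then show False using \<open>b'' \<in> X'\<close> X'_def by simp
    qed
    have AXeq: "AX X = insert e (AX X' - {f})"
    proof -
      have X: "X = insert b X'" unfolding X'_def using bX by auto
      have "f \<notin> eb ` X'" using fA ebX' by auto
      then show ?thesis unfolding AX_def X e_def f_def sb_def by auto
    qed
    have e_E: "e \<in> E" and he: "head e = b" and sbPv: "sb \<in> Pv e"
      unfolding e_def sb_def using eb[OF bS] by auto
    define t where "t = tail e"
    have tV: "t \<in> V \<union> {r}" unfolding t_def using ends e_E by auto
    have bV: "b \<in> V \<union> {r}" using bS S_sub by auto
    define U where "U = PP t b - {sb}"
    have PvE: "Pv e = PP t b" unfolding Pv_def t_def he ..
    have UV: "U \<subseteq> V" unfolding U_def using PP_sub[OF tV bV] by auto
    have AU: "aedge head A ` U \<subseteq> AX X' - {f}"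
    proof
      fix a assume "a \<in> aedge head A ` U"
      then obtain u where u: "u \<in> U" "a = aedge head A u" by auto
      have uV: "u \<in> V" using u UV by auto
      have aA: "a \<in> A" using aedge_in[OF uV] u by simp
      have "a \<noteq> f"
      proof
        assume "a = f"
        then have "u = sb" using inj_onD[OF aedge_inj _ uV sbV] u(2) unfolding f_def by simp
        then show False using u(1) unfolding U_def by simp
      qed
      moreover have "a \<notin> (\<lambda>b. aedge head A (sg b)) ` X'"
      proof
        assume "a \<in> (\<lambda>b. aedge head A (sg b)) ` X'"
        then obtain b'' where b'': "b'' \<in> X'" "a = aedge head A (sg b'')" by auto
        have b''S: "b'' \<in> S" using b'' X'S by auto
        have sgV: "sg b'' \<in> V" using sg_S[OF b''S] S_sub by auto
        have "u = sg b''" using inj_onD[OF aedge_inj _ uV sgV] b''(2) u(2) by simp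
        then have "sg b'' \<in> Pv e" using u(1) PvE unfolding U_def by simp
        then have "arcH b (sg b'')" unfolding arcH_def e_def .
        then have "p (sg b) < p (sg b'')" using kappa_lt[OF bS b''S] b''(1) X'_def by auto
        moreover have "p (sg b'') \<le> p (sg b)" using bmax b''(1) X'_def by auto
        ultimately show False by simp
      qed
      ultimately show "a \<in> AX X' - {f}" unfolding AX_def using aA by auto
    qed
    let ?G = "insert e (AX X' - {f})"
    have AUG: "aedge head A ` U \<subseteq> ?G" using AU by auto
    have eG: "conn tail head ?G t b" using conn_edge[of e ?G tail head] he unfolding t_def by simp
    have "sb \<in> PP t b" using sbPv unfolding Pv_def t_def he .
    then consider "sb \<in> anc t" "sb \<notin> anc b" | "sb \<in> anc b" "sb \<notin> anc t" unfolding PP_def by blast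
    then have c: "conn tail head ?G (par sb) sb"
    proof cases
      case 1
      have c1: "conn tail head (aedge head A ` U) t sb" using path_split(2)[OF tV bV 1] unfolding U_def .
      have c2: "conn tail head (aedge head A ` U) (par sb) b" using path_split(3)[OF tV bV 1] unfolding U_def .
      have "conn tail head ?G (par sb) b" using conn_mono[OF c2 AUG] .
      moreover have "conn tail head ?G t sb" using conn_mono[OF c1 AUG] .
      ultimately show ?thesis using conn_trans[OF conn_trans[OF _ conn_sym[OF eG]]] by blast
    next
      case 2
      have U': "PP b t - {sb} = U" unfolding U_def using PP_sym[of b t] by simp
      have c1: "conn tail head (aedge head A ` U) b sb" using path_split(2)[OF bV tV 2] unfolding U' .
      have c2: "conn tail head (aedge head A ` U) (par sb) t" using path_split(3)[OF bV tV 2] unfolding U' .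
      have "conn tail head ?G (par sb) t" using conn_mono[OF c2 AUG] .
      moreover have "conn tail head ?G b sb" using conn_mono[OF c1 AUG] .
      ultimately show ?thesis using conn_trans[OF conn_trans[OF _ eG]] by blast
    qed
    have "tail f = par sb" "head f = sb" unfolding f_def using tail_aedge head_aedge[OF sbV] by auto
    then have "conn tail head ?G (tail f) (head f)" using c by simp
    then have "uacyclic tail head ?G" using swap_acyclic[OF IH fT eT] by blast
    then show ?thesis using AXeq by simp
  qed
qed


definition ed where "ed v = (if v \<in> S then eb v else aedge head A v)"

lemma AXS_eq: "AX S = (A - aedge head A ` S) \<union> eb ` S"
proof -
  have "(\<lambda>b. aedge head A (sg b)) ` S = aedge head A ` (sg ` S)" by (simp add: image_image)
  then show ?thesis unfolding AX_def sg_surj by simp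
qed

lemma AXS_head: assumes v: "v \<in> V" and e: "e \<in> AX S" "head e = v" shows "e = ed v"
proof -
  consider "e \<in> A" "e \<notin> aedge head A ` S" | "e \<in> eb ` S" using e(1) unfolding AXS_eq by blast
  then show ?thesis
  proof cases
    case 1
    have eA: "e = aedge head A v" using aedge_eq[OF 1(1)] e(2) by simp
    then have "v \<notin> S" using 1(2) by auto
    then show ?thesis unfolding ed_def using eA by simp
  next
    case 2
    then obtain b where b: "b \<in> S" "e = eb b" by auto
    then have "b = v" using eb(2)[OF b(1)] e(2) by simp
    then show ?thesis unfolding ed_def using b by simp
  qed
qed

lemma AXS_mem: assumes v: "v \<in> V" shows "ed v \<in> AX S" "head (ed v) = v"
proof -
  show "ed v \<in> AX S"
  proof (cases "v \<in> S")
    case True then show ?thesis unfolding ed_def AXS_eq by simp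
  next
    case False
    have "aedge head A v \<notin> aedge head A ` S"
    proof
      assume "aedge head A v \<in> aedge head A ` S"
      then obtain s where s: "s \<in> S" "aedge head A v = aedge head A s" by auto
      have "v = s" using inj_onD[OF aedge_inj s(2) v] s(1) S_sub by auto
      then show False using False s(1) by simp
    qed
    then show ?thesis unfolding ed_def AXS_eq using False aedge_in[OF v] by simp
  qed
  show "head (ed v) = v" unfolding ed_def using eb(2) aedge_in[OF v] by simp
qed

lemma AXS_arb: "arborescence V E tail head (AX S)"
  unfolding arborescence_def
proof (intro conjI ballI)
  show "AX S \<subseteq> E" unfolding AXS_eq using A_sub eb(1) by auto
  show "uacyclic tail head (AX S)" by (rule AX_acyc) simp
  fix v assume v: "v \<in> V"
  show "\<exists>!e. e \<in> AX S \<and> head e = v"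
  proof (rule ex1I[of _ "ed v"])
    show "ed v \<in> AX S \<and> head (ed v) = v" using AXS_mem[OF v] by simp
    fix e assume "e \<in> AX S \<and> head e = v"
    then show "e = ed v" using AXS_head[OF v, of e] by simp
  qed
qed

lemma AXS_aedge: assumes v: "v \<in> V" shows "aedge head (AX S) v = ed v"
  unfolding aedge_def
proof (rule the_equality)
  show "ed v \<in> AX S \<and> head (ed v) = v" using AXS_mem[OF v] by simp
  fix e assume "e \<in> AX S \<and> head e = v"
  then show "e = ed v" using AXS_head[OF v, of e] by simp
qed

lemma AXS_sum: "sumwt (AX S) = W"
proof -
  have "sumwt (AX S) = (\<Sum>v\<in>V. w (ed v))" unfolding sumwt_def by (rule sum.cong) (auto simp: AXS_aedge)
  also have "\<dots> = (\<Sum>v\<in>S. w (ed v))"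
    by (rule sum.mono_neutral_right[OF finV S_sub]) (auto simp: ed_def w_A)
  also have "\<dots> = W" unfolding W_def c_def ed_def by simp
  finally show ?thesis .
qed

lemma exch_result: "\<exists>A'. arborescence V E tail head A' \<and> 0 < sumwt A'"
  using AXS_arb AXS_sum W_pos by auto

end

lemma arb_aedge:
  assumes "arborescence V E tail head B" "v \<in> V"
  shows "aedge head B v \<in> B" "head (aedge head B v) = v"
proof -
  have "\<exists>!e. e \<in> B \<and> head e = v" using assms unfolding arborescence_def by blast
  then have "aedge head B v \<in> B \<and> head (aedge head B v) = v" unfolding aedge_def by (rule theI')
  then show "aedge head B v \<in> B" "head (aedge head B v) = v" by auto
qed

context pop_setup
begin

lemma sum_wt_phi:
  assumes B: "arborescence V E tail head B"
  shows "phi V head pref B A \<le> phi V head pref A B \<longleftrightarrow> sumwt B \<le> 0"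
proof -
  define a where "a v = aedge head A v" for v
  define b where "b v = aedge head B v" for v
  have aE: "a v \<in> E" "head (a v) = v" if "v \<in> V" for v
    unfolding a_def using aedge_in[OF that] A_sub by auto
  have bE: "b v \<in> E" "head (b v) = v" if "v \<in> V" for v
    unfolding b_def using arb_aedge[OF B that] B unfolding arborescence_def by auto
  have wv: "w (b v) = of_bool (pref v (b v) (a v)) - of_bool (pref v (a v) (b v))" if v: "v \<in> V" for v
  proof -
    have nb: "\<not> (pref v (b v) (a v) \<and> pref v (a v) (b v))"
    proof
      assume h: "pref v (b v) (a v) \<and> pref v (a v) (b v)"
      then have "pref v (b v) (b v)" using trans v aE[OF v] bE[OF v] by blast
      then show False using irr v bE[OF v] by blast
    qed
    have "w (b v) = (if pref v (b v) (a v) then 1 else if pref v (a v) (b v) then -1 else 0)"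
      unfolding wt_def Let_def bE(2)[OF v] a_def ..
    then show ?thesis using nb by auto
  qed
  have "sumwt B = (\<Sum>v\<in>V. of_bool (pref v (b v) (a v)) - of_bool (pref v (a v) (b v)) :: int)"
    unfolding sumwt_def b_def[symmetric] by (rule sum.cong) (auto simp: wv)
  also have "\<dots> = int (card (V \<inter> {v. pref v (b v) (a v)})) - int (card (V \<inter> {v. pref v (a v) (b v)}))"
    using finV by (simp add: sum_subtractf)
  also have "card (V \<inter> {v. pref v (b v) (a v)}) = phi V head pref B A"
    unfolding phi_def a_def b_def by (rule arg_cong[where f = card]) auto
  also have "card (V \<inter> {v. pref v (a v) (b v)}) = phi V head pref A B"
    unfolding phi_def a_def b_def by (rule arg_cong[where f = card]) auto
  finally show ?thesis by simp
qed

lemma no_pos_walk: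
  assumes hyp: "\<forall>B. arborescence V E tail head B \<longrightarrow> sumwt B \<le> 0"
  shows "cwalk arcD V z \<Longrightarrow> wsum om z \<le> 0"
proof (rule ccontr)
  assume cz: "cwalk arcD V z" and nz: "\<not> wsum om z \<le> 0"
  define P where "P n = (\<exists>z. cwalk arcD V z \<and> 0 < wsum om z \<and> length z = n)" for n
  have "P (length z)" unfolding P_def using cz nz by auto
  define n0 where "n0 = (LEAST n. P n)"
  have "P n0" unfolding n0_def by (rule LeastI[of P, OF \<open>P (length z)\<close>])
  then obtain xs where xs: "cwalk arcD V xs" "0 < wsum om xs" "length xs = n0" unfolding P_def by blast
  have small: "wsum om z' \<le> 0" if "cwalk arcD V z'" "length z' < n0" for z'
  proof (rule ccontr)
    assume "\<not> wsum om z' \<le> 0"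
    then have "P (length z')" unfolding P_def using that by auto
    then have "n0 \<le> length z'" unfolding n0_def by (rule Least_le)
    then show False using that by simp
  qed
  have dist: "distinct (butlast xs)"
  proof (rule ccontr)
    assume "\<not> distinct (butlast xs)"
    then obtain z1 z2 where z: "cwalk arcD V z1" "cwalk arcD V z2" "length z1 < length xs" "length z2 < length xs"
      "wsum om xs = wsum om z1 + wsum om z2"
      using cw_split[OF xs(1)] by blast
    have "wsum om z1 \<le> 0" "wsum om z2 \<le> 0" using small z xs(3) by auto
    then show False using z(5) xs(2) by simp
  qed
  have xsc: "2 \<le> length xs" "hd xs = last xs" "walk arcD xs" "set xs \<subseteq> V"
    using xs(1) unfolding cwalk_def by auto
  define m where "m = length xs - 1"
  have m_pos: "0 < m" unfolding m_def using xsc(1) by simp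
  have lxs: "length xs = Suc m" unfolding m_def using xsc(1) by simp
  define x where "x i = xs ! i" for i
  have xm: "x (Suc i mod m) = xs ! Suc i" if "i < m" for i
  proof (cases "Suc i < m")
    case True then show ?thesis unfolding x_def by simp
  next
    case False
    then have si: "Suc i = m" using that by simp
    have ne: "xs \<noteq> []" using lxs by auto
    have "xs ! 0 = xs ! m" using xsc(2) hd_conv_nth[OF ne] last_conv_nth[OF ne] lxs by simp
    then show ?thesis unfolding x_def si by simp
  qed
  have ex: "exch V r E tail head A pref m x"
  proof (intro exch.intro exch_axioms.intro)
    show "pop_setup V r E tail head A pref" by (rule pop_setup_axioms)
    show "0 < m" by (rule m_pos)
    show "inj_on x {..<m}"
    proof (rule inj_onI)
      fix i j assume "i \<in> {..<m}" "j \<in> {..<m}" "x i = x j"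
      then have "butlast xs ! i = butlast xs ! j" "i < length (butlast xs)" "j < length (butlast xs)"
        unfolding x_def using lxs by (auto simp: nth_butlast)
      then show "i = j" using dist by (simp add: nth_eq_iff_index_eq)
    qed
    show "\<forall>i<m. x i \<in> V" unfolding x_def using xsc(4) lxs by auto
    show "\<forall>i<m. arcD (x i) (x (Suc i mod m))"
      using xsc(3) lxs unfolding walk_nth by (auto simp: xm) (auto simp: x_def)
    have "(\<Sum>i<m. om (x i) (x (Suc i mod m))) = wsum om xs"
      unfolding wsum_nth lxs
    proof (rule sum.cong)
      fix i assume "i \<in> {..<Suc m - 1}"
      then have i: "i < m" by simp
      show "om (x i) (x (Suc i mod m)) = om (xs ! i) (xs ! Suc i)" using xm[OF i] unfolding x_def by simp
    qed simp
    then show "0 < (\<Sum>i<m. om (x i) (x (Suc i mod m)))" using xs(2) by simp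
    show "\<forall>z. cwalk arcD V z \<and> length z \<le> m \<longrightarrow> wsum om z \<le> 0"
      using small xs(3) lxs by auto
  qed
  then obtain B where "arborescence V E tail head B" "0 < sumwt B" using exch.exch_result[OF ex] by blast
  then show False using hyp by fastforce
qed

lemma potentials:
  assumes hyp: "\<forall>B. arborescence V E tail head B \<longrightarrow> sumwt B \<le> 0"
  shows "\<exists>L :: 'v \<Rightarrow> int. \<forall>e\<in>E. \<forall>u\<in>Pv e. L (head e) + w e \<le> L u"
proof -
  obtain L :: "'v \<Rightarrow> int" where L: "\<forall>v\<in>V. \<forall>u\<in>V. arcD v u \<longrightarrow> L v + om v u \<le> L u"
    using bellman_ford[of V arcD om, OF finV] no_pos_walk[OF hyp] by blast
  have "\<forall>e\<in>E. \<forall>u\<in>Pv e. L (head e) + w e \<le> L u"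
  proof (intro ballI)
    fix e u assume e: "e \<in> E" and u: "u \<in> Pv e"
    have hV: "head e \<in> V" using ends e by auto
    have uV: "u \<in> V" using Pv_sub[OF e] u by auto
    have "arcD (head e) u" unfolding arcD_def using e u by auto
    then have "L (head e) + om (head e) u \<le> L u" using L hV uV by auto
    moreover have "w e \<le> om (head e) u" by (rule om_ge[OF e u])
    ultimately show "L (head e) + w e \<le> L u" by simp
  qed
  then show ?thesis by blast
qed

end

lemma count_step:
  fixes Lam :: "int set"
  assumes fin: "finite Lam" and a: "a \<in> Lam" and k: "k \<in> {-1, 0, 1}" and le: "b + k \<le> a"
  shows "int (card {x\<in>Lam. x \<le> b}) + k \<le> int (card {x\<in>Lam. x \<le> a})"
proof -
  have fa: "finite {x\<in>Lam. x \<le> a}" "finite {x\<in>Lam. x \<le> b}" using fin by auto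
  consider "k = -1" | "k = 0" | "k = 1" using k by auto
  then show ?thesis
  proof cases
    case 1
    have "{x\<in>Lam. x \<le> b} \<subseteq> insert b {x\<in>Lam. x \<le> a}" using le 1 by auto
    then have "card {x\<in>Lam. x \<le> b} \<le> card (insert b {x\<in>Lam. x \<le> a})" using fa by (intro card_mono) auto
    also have "\<dots> \<le> Suc (card {x\<in>Lam. x \<le> a})" using fa by (simp add: card_insert_if)
    finally show ?thesis using 1 by simp
  next
    case 2
    have "{x\<in>Lam. x \<le> b} \<subseteq> {x\<in>Lam. x \<le> a}" using le 2 by auto
    then show ?thesis using fa 2 by (simp add: card_mono)
  next
    case 3
    have "{x\<in>Lam. x \<le> b} \<subseteq> {x\<in>Lam. x \<le> a} - {a}" using le 3 by auto
    then have "card {x\<in>Lam. x \<le> b} \<le> card ({x\<in>Lam. x \<le> a} - {a})" using fa by (intro card_mono) auto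
    also have "\<dots> = card {x\<in>Lam. x \<le> a} - 1" using fa a by simp
    finally have "card {x\<in>Lam. x \<le> b} \<le> card {x\<in>Lam. x \<le> a} - 1" .
    moreover have "card {x\<in>Lam. x \<le> a} \<ge> 1" using fa a by (metis (mono_tags, lifting) One_nat_def
      Suc_leI card_gt_0_iff empty_iff mem_Collect_eq order_refl)
    ultimately show ?thesis using 3 by linarith
  qed
qed

locale dual_constr = pop_setup V r E tail head A pref
  for V :: "'v set" and r :: 'v and E :: "'e set" and tail head :: "'e \<Rightarrow> 'v" and A :: "'e set"
    and pref :: "'v \<Rightarrow> 'e \<Rightarrow> 'e \<Rightarrow> bool" +
  fixes L :: "'v \<Rightarrow> int"
  assumes Lprop: "\<forall>e\<in>E. \<forall>u\<in>Pv e. L (head e) + w e \<le> L u"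
    and Vne: "V \<noteq> {}"
begin

definition top :: int where "top = Max (L ` V) + 1"
definition Lam where "Lam = insert top (L ` V)"
definition CC where "CC lam = {e\<in>E. \<forall>u\<in>Pv e. lam \<le> L u}"
definition Ch where "Ch = {CC lam | lam. lam \<in> Lam \<and> CC lam \<noteq> {}}"
definition ell where "ell e = Min (insert top (L ` Pv e))"
definition N where "N k = card {lam\<in>Lam. lam \<le> k}"

lemma finLam: "finite Lam" unfolding Lam_def using finV by simp

lemma L_lt_top: "u \<in> V \<Longrightarrow> L u < top"
  unfolding top_def using finV by (simp add: Max_ge le_imp_less_Suc)

lemma Lam_le_top: "lam \<in> Lam \<Longrightarrow> lam \<le> top"
  unfolding Lam_def using L_lt_top by fastforce

lemma finPv: "e \<in> E \<Longrightarrow> finite (Pv e)" using Pv_sub finV finite_subset by blast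

lemma CC_A: assumes v: "v \<in> V" shows "aedge head A v \<in> CC lam \<longleftrightarrow> lam \<le> L v"
  unfolding CC_def using Pv_aedge[OF v] aedge_in[OF v] A_sub by auto

lemma mem_ell: assumes e: "e \<in> E" and lt: "lam \<le> top" shows "e \<in> CC lam \<longleftrightarrow> lam \<le> ell e"
proof -
  have fin: "finite (insert top (L ` Pv e))" using finPv[OF e] by simp
  have "lam \<le> ell e \<longleftrightarrow> (\<forall>x\<in>insert top (L ` Pv e). lam \<le> x)"
    unfolding ell_def using fin by (simp add: Min_ge_iff)
  then show ?thesis unfolding CC_def using e lt by auto
qed

lemma ell_Lam: assumes e: "e \<in> E" shows "ell e \<in> Lam"
proof -
  have fin: "finite (insert top (L ` Pv e))" using finPv[OF e] by simp
  have "ell e \<in> insert top (L ` Pv e)" unfolding ell_def using fin by (intro Min_in) auto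
  moreover have "insert top (L ` Pv e) \<subseteq> Lam" unfolding Lam_def using Pv_sub[OF e] by auto
  ultimately show ?thesis by auto
qed

lemma ell_A: assumes v: "v \<in> V" shows "ell (aedge head A v) = L v"
proof -
  have "ell (aedge head A v) = Min {top, L v}" unfolding ell_def Pv_aedge[OF v] by simp
  then show ?thesis using L_lt_top[OF v] by simp
qed

lemma CC_inj: "inj_on CC Lam"
proof -
  have ne: "CC l1 \<noteq> CC l2" if "l1 \<in> Lam" "l2 \<in> Lam" "l1 < l2" for l1 l2
  proof -
    have "l1 \<noteq> top" using that Lam_le_top by fastforce
    then have "l1 \<in> L ` V" using that(1) unfolding Lam_def by simp
    then obtain u where u: "u \<in> V" "L u = l1" by auto
    have "aedge head A u \<in> CC l1" using CC_A[OF u(1)] u by simp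
    moreover have "aedge head A u \<notin> CC l2" using CC_A[OF u(1)] u that(3) by simp
    ultimately show ?thesis by blast
  qed
  show ?thesis
  proof (rule inj_onI)
    fix l1 l2 assume "l1 \<in> Lam" "l2 \<in> Lam" "CC l1 = CC l2"
    then show "l1 = l2" using ne by (metis linorder_neqE)
  qed
qed

lemma cnt: assumes e: "e \<in> E" shows "card {C\<in>Ch. e \<in> C} = N (ell e)"
proof -
  have eq: "{C\<in>Ch. e \<in> C} = CC ` {lam\<in>Lam. lam \<le> ell e}"
  proof
    show "{C\<in>Ch. e \<in> C} \<subseteq> CC ` {lam\<in>Lam. lam \<le> ell e}"
    proof
      fix C assume "C \<in> {C\<in>Ch. e \<in> C}"
      then obtain lam where l: "lam \<in> Lam" "C = CC lam" "e \<in> C" unfolding Ch_def by auto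
      then have "lam \<le> ell e" using mem_ell[OF e Lam_le_top[OF l(1)]] by simp
      then show "C \<in> CC ` {lam\<in>Lam. lam \<le> ell e}" using l by auto
    qed
    show "CC ` {lam\<in>Lam. lam \<le> ell e} \<subseteq> {C\<in>Ch. e \<in> C}"
    proof
      fix C assume "C \<in> CC ` {lam\<in>Lam. lam \<le> ell e}"
      then obtain lam where l: "lam \<in> Lam" "lam \<le> ell e" "C = CC lam" by auto
      then have "e \<in> C" using mem_ell[OF e Lam_le_top[OF l(1)]] by simp
      then show "C \<in> {C\<in>Ch. e \<in> C}" unfolding Ch_def using l by auto
    qed
  qed
  have "inj_on CC {lam\<in>Lam. lam \<le> ell e}" using CC_inj by (rule inj_on_subset) auto
  then show ?thesis unfolding eq N_def by (simp add: card_image)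
qed

lemma w_range: "w e \<in> {-1, 0, 1}" unfolding wt_def Let_def by auto

lemma feas: assumes e: "e \<in> E" shows "int (N (L (head e))) + w e \<le> int (N (ell e))"
proof -
  have hV: "head e \<in> V" using ends e by auto
  have le: "L (head e) + w e \<le> ell e"
  proof -
    have fin: "finite (insert top (L ` Pv e))" using finPv[OF e] by simp
    have "w e \<le> 1" using w_range[of e] by auto
    then have "L (head e) + w e \<le> top" using L_lt_top[OF hV] by simp
    moreover have "\<forall>u\<in>Pv e. L (head e) + w e \<le> L u" using Lprop e by blast
    ultimately show ?thesis unfolding ell_def using fin by (simp add: Min_ge_iff)
  qed
  show ?thesis unfolding N_def by (rule count_step[OF finLam ell_Lam[OF e] w_range le])
qed

lemma Ch_sub: "Ch \<subseteq> Pow E" unfolding Ch_def CC_def by auto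

lemma finCh: "finite Ch" using Ch_sub finE by (meson finite_Pow_iff finite_subset)

lemma A_CC: "A \<inter> CC lam = aedge head A ` {u\<in>V. lam \<le> L u}"
proof
  show "A \<inter> CC lam \<subseteq> aedge head A ` {u\<in>V. lam \<le> L u}"
  proof
    fix a assume a: "a \<in> A \<inter> CC lam"
    have hV: "head a \<in> V" using a A_sub ends by auto
    have aeq: "aedge head A (head a) = a" using aedge_eq a by auto
    then have "lam \<le> L (head a)" using CC_A[OF hV, of lam] a by simp
    then show "a \<in> aedge head A ` {u\<in>V. lam \<le> L u}" using hV aeq by (auto intro!: image_eqI[of _ _ "head a"])
  qed
  show "aedge head A ` {u\<in>V. lam \<le> L u} \<subseteq> A \<inter> CC lam"
    using CC_A aedge_in by auto
qed

lemma span_rank: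
  assumes C: "C \<in> Ch"
  shows "gspan tail head E (A \<inter> C) = C" "grank tail head C = card (A \<inter> C)"
proof -
  obtain lam where l: "lam \<in> Lam" "C = CC lam" using C unfolding Ch_def by auto
  define U where "U = {u\<in>V. lam \<le> L u}"
  have UV: "U \<subseteq> V" unfolding U_def by auto
  have F: "A \<inter> C = aedge head A ` U" unfolding U_def l(2) by (rule A_CC)
  have finF: "finite (A \<inter> C)" using finE A_sub by (meson finite_Int finite_subset)
  have acF: "uacyclic tail head (A \<inter> C)" using A_acyc by (rule uacyclic_subset) auto
  have CE: "C \<subseteq> E" using C Ch_sub by auto
  have connC: "conn tail head (A \<inter> C) (tail e) (head e)" if e: "e \<in> C" for e
  proof -
    have eE: "e \<in> E" using e CE by auto
    have "tail e \<in> V \<union> {r}" "head e \<in> V \<union> {r}" using ends eE by auto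
    moreover have "PP (tail e) (head e) \<subseteq> U" using e Pv_sub[OF eE] unfolding l(2) CC_def U_def Pv_def by auto
    ultimately show ?thesis unfolding F by (rule conn_tree[OF _ _ _ UV])
  qed
  have "gspan tail head E (A \<inter> C) = {e\<in>E. e \<in> A \<inter> C \<or> conn tail head (A \<inter> C) (tail e) (head e)}"
    by (rule gspan_char[OF finF acF])
  also have "\<dots> = C"
  proof
    show "{e\<in>E. e \<in> A \<inter> C \<or> conn tail head (A \<inter> C) (tail e) (head e)} \<subseteq> C"
    proof
      fix e assume e: "e \<in> {e\<in>E. e \<in> A \<inter> C \<or> conn tail head (A \<inter> C) (tail e) (head e)}"
      show "e \<in> C"
      proof (cases "e \<in> A \<inter> C")
        case True then show ?thesis by simp
      next
        case False
        then have c: "conn tail head (aedge head A ` U) (tail e) (head e)" using e F by auto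
        have "Pv e \<subseteq> U" unfolding Pv_def by (rule conn_tree_rev[OF c UV])
        then show ?thesis using e unfolding l(2) CC_def U_def by auto
      qed
    qed
    show "C \<subseteq> {e\<in>E. e \<in> A \<inter> C \<or> conn tail head (A \<inter> C) (tail e) (head e)}"
      using CE connC by auto
  qed
  finally show "gspan tail head E (A \<inter> C) = C" .
  have finC: "finite C" using CE finE finite_subset by blast
  obtain X where X: "X \<subseteq> C" "uacyclic tail head X" "grank tail head C = card X"
    using grank_obtain[OF finC] by blast
  have "card X \<le> card (A \<inter> C)"
    by (rule acyclic_span_card) (use X finC finF acF connC finite_subset in auto)
  moreover have "card (A \<inter> C) \<le> grank tail head C" by (rule grank_ge[OF finC _ acF]) auto
  ultimately show "grank tail head C = card (A \<inter> C)" using X(3) by simp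
qed

lemma card_AC: assumes CE: "C \<subseteq> E" shows "card (A \<inter> C) = card {v\<in>V. aedge head A v \<in> C}"
proof -
  have "A \<inter> C = aedge head A ` {v\<in>V. aedge head A v \<in> C}"
  proof
    show "A \<inter> C \<subseteq> aedge head A ` {v\<in>V. aedge head A v \<in> C}"
    proof
      fix a assume a: "a \<in> A \<inter> C"
      have hV: "head a \<in> V" using a A_sub ends by auto
      have "aedge head A (head a) = a" using aedge_eq a by auto
      then show "a \<in> aedge head A ` {v\<in>V. aedge head A v \<in> C}" using hV a by force
    qed
    show "aedge head A ` {v\<in>V. aedge head A v \<in> C} \<subseteq> A \<inter> C" using aedge_in by auto
  qed
  moreover have "inj_on (aedge head A) {v\<in>V. aedge head A v \<in> C}" using aedge_inj by (rule inj_on_subset) auto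
  ultimately show ?thesis by (simp add: card_image)
qed


definition yy :: "'e set \<Rightarrow> real" where "yy S = (if S \<in> Ch then 1 else 0)"
definition al :: "'v \<Rightarrow> real" where "al v = - real (card {C \<in> Ch. aedge head A v \<in> C})"

lemma Ch_eq: "{S. S \<subseteq> E \<and> 0 < yy S} = Ch" using Ch_sub unfolding yy_def by auto

lemma sum_yy: assumes e: "e \<in> E" shows "(\<Sum>S\<in>{S. S \<subseteq> E \<and> e \<in> S}. yy S) = real (card {C\<in>Ch. e \<in> C})"
proof -
  have "{S. S \<subseteq> E \<and> e \<in> S} \<subseteq> Pow E" by auto
  then have fin: "finite {S. S \<subseteq> E \<and> e \<in> S}" using finE by (meson finite_Pow_iff finite_subset)
  have "(\<Sum>S\<in>{S. S \<subseteq> E \<and> e \<in> S}. yy S) = (\<Sum>S\<in>{S. S \<subseteq> E \<and> e \<in> S}. of_bool (S \<in> Ch))"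
    unfolding yy_def by (rule sum.cong) auto
  also have "\<dots> = real (card ({S. S \<subseteq> E \<and> e \<in> S} \<inter> {S. S \<in> Ch}))" using fin by simp
  also have "{S. S \<subseteq> E \<and> e \<in> S} \<inter> {S. S \<in> Ch} = {C\<in>Ch. e \<in> C}" using Ch_sub by auto
  finally show ?thesis .
qed

lemma al_eq: assumes v: "v \<in> V" shows "al v = - real (N (L v))"
  unfolding al_def using cnt[of "aedge head A v"] ell_A[OF v] aedge_in[OF v] A_sub by auto

lemma feasible:
  assumes e: "e \<in> E"
  shows "real_of_int (wt head pref A e) \<le> (\<Sum>S\<in>{S. S \<subseteq> E \<and> e \<in> S}. yy S) + al (head e)"
proof -
  have hV: "head e \<in> V" using ends e by auto
  have "int (N (L (head e))) + w e \<le> int (N (ell e))" by (rule feas[OF e])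
  then have "real_of_int (w e) \<le> real (N (ell e)) - real (N (L (head e)))" by linarith
  then show ?thesis unfolding sum_yy[OF e] al_eq[OF hV] cnt[OF e] by simp
qed

lemma objective: "(\<Sum>S\<in>Pow E. real (grank tail head S) * yy S) + (\<Sum>v\<in>V. al v) = 0"
proof -
  have s1: "(\<Sum>S\<in>Pow E. real (grank tail head S) * yy S) = (\<Sum>C\<in>Ch. real (grank tail head C) * yy C)"
    by (rule sum.mono_neutral_right[symmetric, symmetric]) (use finE Ch_sub in \<open>auto simp: yy_def\<close>)
  also have "\<dots> = (\<Sum>C\<in>Ch. real (card {v\<in>V. aedge head A v \<in> C}))"
  proof (rule sum.cong)
    fix C assume C: "C \<in> Ch"
    have "grank tail head C = card {v\<in>V. aedge head A v \<in> C}"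
      using span_rank(2)[OF C] card_AC C Ch_sub by auto
    then show "real (grank tail head C) * yy C = real (card {v\<in>V. aedge head A v \<in> C})"
      unfolding yy_def using C by simp
  qed simp
  finally have s1': "(\<Sum>S\<in>Pow E. real (grank tail head S) * yy S) = (\<Sum>C\<in>Ch. real (card {v\<in>V. aedge head A v \<in> C}))" .
  have "(\<Sum>v\<in>V. al v) = - (\<Sum>v\<in>V. \<Sum>C\<in>Ch. of_bool (aedge head A v \<in> C) :: real)"
  proof -
    have "real (card {C \<in> Ch. aedge head A v \<in> C}) = (\<Sum>C\<in>Ch. of_bool (aedge head A v \<in> C))" for v
    proof -
      have "(\<Sum>C\<in>Ch. of_bool (aedge head A v \<in> C) :: real) = real (card (Ch \<inter> {C. aedge head A v \<in> C}))"
        using finCh by simp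
      moreover have "Ch \<inter> {C. aedge head A v \<in> C} = {C \<in> Ch. aedge head A v \<in> C}" by auto
      ultimately show ?thesis by simp
    qed
    then show ?thesis unfolding al_def by (simp add: sum_negf)
  qed
  also have "\<dots> = - (\<Sum>C\<in>Ch. \<Sum>v\<in>V. of_bool (aedge head A v \<in> C) :: real)" by (simp add: sum.swap[of _ V])
  also have "\<dots> = - (\<Sum>C\<in>Ch. real (card {v\<in>V. aedge head A v \<in> C}))"
  proof -
    have "(\<Sum>v\<in>V. of_bool (aedge head A v \<in> C) :: real) = real (card {v\<in>V. aedge head A v \<in> C})" for C
    proof -
      have "(\<Sum>v\<in>V. of_bool (aedge head A v \<in> C) :: real) = real (card (V \<inter> {v. aedge head A v \<in> C}))"
        using finV by simp
      moreover have "V \<inter> {v. aedge head A v \<in> C} = {v\<in>V. aedge head A v \<in> C}" by auto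
      ultimately show ?thesis by simp
    qed
    then show ?thesis by simp
  qed
  finally show ?thesis using s1' by simp
qed

lemma chain: "is_chain Ch"
  unfolding is_chain_def
proof (intro ballI impI)
  fix S T assume S: "S \<in> Ch" and T: "T \<in> Ch" and ne: "S \<noteq> T"
  obtain l1 where l1: "l1 \<in> Lam" "S = CC l1" using S unfolding Ch_def by auto
  obtain l2 where l2: "l2 \<in> Lam" "T = CC l2" using T unfolding Ch_def by auto
  have mono: "CC b \<subseteq> CC a" if "a \<le> b" for a b unfolding CC_def using that by auto
  show "S \<subset> T \<or> T \<subset> S"
  proof (cases "l1 \<le> l2")
    case True then show ?thesis using mono[OF True] ne l1 l2 by auto
  next
    case False then have "l2 \<le> l1" by simp
    then show ?thesis using mono ne l1 l2 by auto
  qed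
qed

lemma E_in: "E \<in> Ch"
proof -
  define l0 where "l0 = Min (L ` V)"
  have l0: "l0 \<in> Lam" unfolding l0_def Lam_def using finV Vne by simp
  have "\<forall>e\<in>E. \<forall>u\<in>Pv e. l0 \<le> L u"
  proof (intro ballI)
    fix e u assume "e \<in> E" "u \<in> Pv e"
    then have "u \<in> V" using Pv_sub by auto
    then show "l0 \<le> L u" unfolding l0_def using finV by (intro Min_le) auto
  qed
  then have "CC l0 = E" unfolding CC_def by auto
  moreover obtain v where "v \<in> V" using Vne by blast
  then have "E \<noteq> {}" using aedge_in A_sub by blast
  ultimately show ?thesis unfolding Ch_def using l0 by force
qed

lemma dual_exists:
  "\<exists>(y :: 'e set \<Rightarrow> real) (\<alpha> :: 'v \<Rightarrow> real).
       (\<forall>S \<subseteq> E. y S \<ge> 0) \<and>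
       (\<forall>v \<in> V. \<forall>e \<in> E. head e = v \<longrightarrow>
          (\<Sum>S \<in> {S. S \<subseteq> E \<and> e \<in> S}. y S) + \<alpha> v \<ge> real_of_int (wt head pref A e)) \<and>
       (\<Sum>S \<in> Pow E. real (grank tail head S) * y S) + (\<Sum>v \<in> V. \<alpha> v) = 0 \<and>
       (let \<C> = {S. S \<subseteq> E \<and> y S > 0} in
          (\<forall>S \<subseteq> E. y S \<in> \<int>) \<and> is_chain \<C> \<and>
          (\<forall>C \<in> \<C>. gspan tail head E (A \<inter> C) = C) \<and>
          (\<forall>C \<in> \<C>. C \<noteq> {}) \<and> E \<in> \<C> \<and>
          (\<forall>C \<in> \<C>. y C = 1) \<and>
          (\<forall>v \<in> V. \<alpha> v = - real (card {C \<in> \<C>. aedge head A v \<in> C})))"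
proof (intro exI conjI)
  show "\<forall>S \<subseteq> E. yy S \<ge> 0" unfolding yy_def by simp
  show "\<forall>v \<in> V. \<forall>e \<in> E. head e = v \<longrightarrow>
          (\<Sum>S \<in> {S. S \<subseteq> E \<and> e \<in> S}. yy S) + al v \<ge> real_of_int (wt head pref A e)"
    using feasible by blast
  show "(\<Sum>S \<in> Pow E. real (grank tail head S) * yy S) + (\<Sum>v \<in> V. al v) = 0" by (rule objective)
  show "let \<C> = {S. S \<subseteq> E \<and> yy S > 0} in
          (\<forall>S \<subseteq> E. yy S \<in> \<int>) \<and> is_chain \<C> \<and>
          (\<forall>C \<in> \<C>. gspan tail head E (A \<inter> C) = C) \<and>
          (\<forall>C \<in> \<C>. C \<noteq> {}) \<and> E \<in> \<C> \<and>
          (\<forall>C \<in> \<C>. yy C = 1) \<and>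
          (\<forall>v \<in> V. al v = - real (card {C \<in> \<C>. aedge head A v \<in> C}))"
    unfolding Let_def Ch_eq
  proof (intro conjI ballI allI impI)
    show "\<And>S. S \<subseteq> E \<Longrightarrow> yy S \<in> \<int>" unfolding yy_def by simp
    show "is_chain Ch" by (rule chain)
    show "\<And>C. C \<in> Ch \<Longrightarrow> gspan tail head E (A \<inter> C) = C" by (rule span_rank(1))
    show "\<And>C. C \<in> Ch \<Longrightarrow> C \<noteq> {}" unfolding Ch_def by auto
    show "E \<in> Ch" by (rule E_in)
    show "\<And>C. C \<in> Ch \<Longrightarrow> yy C = 1" unfolding yy_def by simp
    show "\<And>v. v \<in> V \<Longrightarrow> al v = - real (card {C \<in> Ch. aedge head A v \<in> C})" unfolding al_def by simp
  qed
qed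

end

context pop_setup
begin

lemma weak_dual:
  fixes y :: "'e set \<Rightarrow> real" and \<alpha> :: "'v \<Rightarrow> real"
  assumes ynn: "\<forall>S \<subseteq> E. y S \<ge> 0"
    and fe: "\<forall>v \<in> V. \<forall>e \<in> E. head e = v \<longrightarrow>
          (\<Sum>S \<in> {S. S \<subseteq> E \<and> e \<in> S}. y S) + \<alpha> v \<ge> real_of_int (wt head pref A e)"
    and ob: "(\<Sum>S \<in> Pow E. real (grank tail head S) * y S) + (\<Sum>v \<in> V. \<alpha> v) = 0"
    and B: "arborescence V E tail head B"
  shows "sumwt B \<le> 0"
proof -
  define b where "b v = aedge head B v" for v
  have bE: "b v \<in> B" "b v \<in> E" "head (b v) = v" if "v \<in> V" for v
    unfolding b_def using arb_aedge[OF B that] B unfolding arborescence_def by auto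
  have finPow: "finite (Pow E)" using finE by simp
  have "real_of_int (sumwt B) = (\<Sum>v\<in>V. real_of_int (w (b v)))" unfolding sumwt_def b_def by simp
  also have "\<dots> \<le> (\<Sum>v\<in>V. (\<Sum>S \<in> {S. S \<subseteq> E \<and> b v \<in> S}. y S) + \<alpha> v)"
    by (rule sum_mono) (use fe bE in blast)
  also have "\<dots> = (\<Sum>v\<in>V. \<Sum>S\<in>Pow E. y S * of_bool (b v \<in> S)) + (\<Sum>v\<in>V. \<alpha> v)"
  proof -
    have "(\<Sum>S \<in> {S. S \<subseteq> E \<and> b v \<in> S}. y S) = (\<Sum>S\<in>Pow E. y S * of_bool (b v \<in> S))" for v
    proof -
      have "(\<Sum>S\<in>Pow E. y S * of_bool (b v \<in> S)) = (\<Sum>S\<in>Pow E. if b v \<in> S then y S else 0)"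
        by (rule sum.cong) auto
      also have "\<dots> = (\<Sum>S\<in>{S\<in>Pow E. b v \<in> S}. y S)"
        by (rule sum.inter_filter[OF finPow, symmetric])
      finally have "(\<Sum>S\<in>Pow E. y S * of_bool (b v \<in> S)) = (\<Sum>S\<in>{S\<in>Pow E. b v \<in> S}. y S)" .
      moreover have "{S\<in>Pow E. b v \<in> S} = {S. S \<subseteq> E \<and> b v \<in> S}" by auto
      ultimately show ?thesis by simp
    qed
    then show ?thesis by (simp add: sum.distrib)
  qed
  also have "(\<Sum>v\<in>V. \<Sum>S\<in>Pow E. y S * of_bool (b v \<in> S)) = (\<Sum>S\<in>Pow E. y S * real (card {v\<in>V. b v \<in> S}))"
  proof -
    have "(\<Sum>v\<in>V. \<Sum>S\<in>Pow E. y S * of_bool (b v \<in> S)) = (\<Sum>S\<in>Pow E. \<Sum>v\<in>V. y S * of_bool (b v \<in> S))"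
      by (rule sum.swap)
    also have "\<dots> = (\<Sum>S\<in>Pow E. y S * real (card {v\<in>V. b v \<in> S}))"
    proof (rule sum.cong)
      fix S
      have "(\<Sum>v\<in>V. y S * of_bool (b v \<in> S)) = y S * (\<Sum>v\<in>V. of_bool (b v \<in> S))" by (simp add: sum_distrib_left)
      also have "(\<Sum>v\<in>V. of_bool (b v \<in> S) :: real) = real (card (V \<inter> {v. b v \<in> S}))" using finV by simp
      also have "V \<inter> {v. b v \<in> S} = {v\<in>V. b v \<in> S}" by auto
      finally show "(\<Sum>v\<in>V. y S * of_bool (b v \<in> S)) = y S * real (card {v\<in>V. b v \<in> S})" .
    qed simp
    finally show ?thesis .
  qed
  also have "(\<Sum>S\<in>Pow E. y S * real (card {v\<in>V. b v \<in> S})) \<le> (\<Sum>S\<in>Pow E. real (grank tail head S) * y S)"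
  proof (rule sum_mono)
    fix S assume S: "S \<in> Pow E"
    have finS: "finite S" using S finE finite_subset by auto
    have inj: "inj_on b {v\<in>V. b v \<in> S}" by (rule inj_onI) (metis (no_types, lifting) bE(3) mem_Collect_eq)
    have sub: "b ` {v\<in>V. b v \<in> S} \<subseteq> S" by auto
    have acB: "uacyclic tail head B" using B unfolding arborescence_def by blast
    have "uacyclic tail head (b ` {v\<in>V. b v \<in> S})" by (rule uacyclic_subset[OF acB]) (auto simp: bE)
    then have "card (b ` {v\<in>V. b v \<in> S}) \<le> grank tail head S" using grank_ge[OF finS sub] by blast
    then have "card {v\<in>V. b v \<in> S} \<le> grank tail head S" using card_image[OF inj] by simp
    then show "y S * real (card {v\<in>V. b v \<in> S}) \<le> real (grank tail head S) * y S"
      using ynn S by (simp add: mult.commute mult_left_mono)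
  qed
  finally have "real_of_int (sumwt B) \<le> (\<Sum>S\<in>Pow E. real (grank tail head S) * y S) + (\<Sum>v\<in>V. \<alpha> v)"
    by simp
  then show ?thesis using ob by simp
qed

end

theorem lemma2p1:
  fixes V :: "'v set" and r :: 'v and E :: "'e set"
    and tail head :: "'e \<Rightarrow> 'v"
    and pref :: "'v \<Rightarrow> 'e \<Rightarrow> 'e \<Rightarrow> bool"
    and A :: "'e set"
  assumes finV: "finite V" and finE: "finite E"
    and Vne: "V \<noteq> {}"
    and rV: "r \<notin> V"
    and ends: "\<forall>e \<in> E. tail e \<in> V \<union> {r} \<and> head e \<in> V"
    and irr: "\<forall>v \<in> V. \<forall>e \<in> E. head e = v \<longrightarrow> \<not> pref v e e"
    and trans: "\<forall>v \<in> V. \<forall>e \<in> E. \<forall>f \<in> E. \<forall>g \<in> E.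
                  head e = v \<and> head f = v \<and> head g = v \<and> pref v e f \<and> pref v f g \<longrightarrow> pref v e g"
    and arb: "arborescence V E tail head A"
  shows "popular V E tail head pref A \<longleftrightarrow>
    (\<exists>(y :: 'e set \<Rightarrow> real) (\<alpha> :: 'v \<Rightarrow> real).
       (\<forall>S \<subseteq> E. y S \<ge> 0) \<and>
       (\<forall>v \<in> V. \<forall>e \<in> E. head e = v \<longrightarrow>
          (\<Sum>S \<in> {S. S \<subseteq> E \<and> e \<in> S}. y S) + \<alpha> v \<ge> real_of_int (wt head pref A e)) \<and>
       (\<Sum>S \<in> Pow E. real (grank tail head S) * y S) + (\<Sum>v \<in> V. \<alpha> v) = 0 \<and>
       (let \<C> = {S. S \<subseteq> E \<and> y S > 0} in
          (\<forall>S \<subseteq> E. y S \<in> \<int>) \<and> is_chain \<C> \<and>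
          (\<forall>C \<in> \<C>. gspan tail head E (A \<inter> C) = C) \<and>
          (\<forall>C \<in> \<C>. C \<noteq> {}) \<and> E \<in> \<C> \<and>
          (\<forall>C \<in> \<C>. y C = 1) \<and>
          (\<forall>v \<in> V. \<alpha> v = - real (card {C \<in> \<C>. aedge head A v \<in> C}))))"
proof -
  interpret P: pop_setup V r E tail head A pref
    by (intro pop_setup.intro arb_tree.intro pop_setup_axioms.intro finV finE rV ends arb irr trans)
  show ?thesis
  proof
    assume pop: "popular V E tail head pref A"
    have hyp: "\<forall>B. arborescence V E tail head B \<longrightarrow> P.sumwt B \<le> 0"
      using pop P.sum_wt_phi unfolding popular_def by blast
    obtain L where L: "\<forall>e\<in>E. \<forall>u\<in>P.Pv e. L (head e) + wt head pref A e \<le> L u"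
      using P.potentials[OF hyp] by blast
    interpret D: dual_constr V r E tail head A pref L
      by (intro dual_constr.intro dual_constr_axioms.intro P.pop_setup_axioms L Vne)
    show "\<exists>(y :: 'e set \<Rightarrow> real) (\<alpha> :: 'v \<Rightarrow> real).
       (\<forall>S \<subseteq> E. y S \<ge> 0) \<and>
       (\<forall>v \<in> V. \<forall>e \<in> E. head e = v \<longrightarrow>
          (\<Sum>S \<in> {S. S \<subseteq> E \<and> e \<in> S}. y S) + \<alpha> v \<ge> real_of_int (wt head pref A e)) \<and>
       (\<Sum>S \<in> Pow E. real (grank tail head S) * y S) + (\<Sum>v \<in> V. \<alpha> v) = 0 \<and>
       (let \<C> = {S. S \<subseteq> E \<and> y S > 0} in
          (\<forall>S \<subseteq> E. y S \<in> \<int>) \<and> is_chain \<C> \<and>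
          (\<forall>C \<in> \<C>. gspan tail head E (A \<inter> C) = C) \<and>
          (\<forall>C \<in> \<C>. C \<noteq> {}) \<and> E \<in> \<C> \<and>
          (\<forall>C \<in> \<C>. y C = 1) \<and>
          (\<forall>v \<in> V. \<alpha> v = - real (card {C \<in> \<C>. aedge head A v \<in> C})))"
      by (rule D.dual_exists)
  next
    assume "\<exists>(y :: 'e set \<Rightarrow> real) (\<alpha> :: 'v \<Rightarrow> real).
       (\<forall>S \<subseteq> E. y S \<ge> 0) \<and>
       (\<forall>v \<in> V. \<forall>e \<in> E. head e = v \<longrightarrow>
          (\<Sum>S \<in> {S. S \<subseteq> E \<and> e \<in> S}. y S) + \<alpha> v \<ge> real_of_int (wt head pref A e)) \<and>
       (\<Sum>S \<in> Pow E. real (grank tail head S) * y S) + (\<Sum>v \<in> V. \<alpha> v) = 0 \<and>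
       (let \<C> = {S. S \<subseteq> E \<and> y S > 0} in
          (\<forall>S \<subseteq> E. y S \<in> \<int>) \<and> is_chain \<C> \<and>
          (\<forall>C \<in> \<C>. gspan tail head E (A \<inter> C) = C) \<and>
          (\<forall>C \<in> \<C>. C \<noteq> {}) \<and> E \<in> \<C> \<and>
          (\<forall>C \<in> \<C>. y C = 1) \<and>
          (\<forall>v \<in> V. \<alpha> v = - real (card {C \<in> \<C>. aedge head A v \<in> C})))"
    then obtain y :: "'e set \<Rightarrow> real" and \<alpha> :: "'v \<Rightarrow> real" where
      ynn: "\<forall>S \<subseteq> E. y S \<ge> 0" and
      fe: "\<forall>v \<in> V. \<forall>e \<in> E. head e = v \<longrightarrow>
          (\<Sum>S \<in> {S. S \<subseteq> E \<and> e \<in> S}. y S) + \<alpha> v \<ge> real_of_int (wt head pref A e)" and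
      ob: "(\<Sum>S \<in> Pow E. real (grank tail head S) * y S) + (\<Sum>v \<in> V. \<alpha> v) = 0"
      by blast
    have "\<forall>B. arborescence V E tail head B \<longrightarrow> P.sumwt B \<le> 0"
      using P.weak_dual[OF ynn fe ob] by blast
    then show "popular V E tail head pref A"
      unfolding popular_def using arb P.sum_wt_phi by blast
  qed
qed

end
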